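(* Let $\Omega\subset\mathbb{R}^n$ ($n\ge2$) be a bounded domain with $C^2$ boundary and $f\in C^1(\mathbb{R})$. Let $u\in C^2(\overline\Omega)$ solve $-\Delta u=f(u)$ in $\Omega$, $\partial_\nu u=0$ on $\partial\Omega$, and let $a\ge1$. Then $$a\lambda_\gamma\ge(a-1)\lambda_0+\mu_{a\gamma}-\sup f'.$$
   Context: $\nu$ is the outward unit normal; $\gamma(x)=\inf_{X\in\nu(x)^\perp\setminus\{0\}} \frac{X\cdot\nabla\nu(x)\cdot X}{|X|^2}$ is the lowest principal curvature of $\partial\Omega$; $\sup f'=\sup_\mathbb{R}f'$. $\lambda_0:=\inf\{\int_\Omega|\nabla\psi|^2-\int_\Omega f'(u)\psi^2:\psi\in H^1(\Omega),\|\psi\|_{L^2}=1\}$; $\lambda_\gamma:=\inf\{\int_\Omega|\nabla\psi|^2-\int_\Omega f'(u)\psi^2+\int_{\partial\Omega}\gamma\psi^2:\psi\in H^1(\Omega),\|\psi\|_{L^2}=1\}$; for $a\ge0$, $\mu_{a\gamma}:=\inf\{\int_\Omega|\nabla\psi|^2+a\int_{\partial\Omega}\gamma\psi^2:\psi\in H^1(\Omega),\|\psi\|_{L^2}=1\}$. *)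

theory Defs
  imports "HOL-Analysis.Analysis"
begin

definition grad :: "('a::euclidean_space \<Rightarrow> real) \<Rightarrow> 'a \<Rightarrow> 'a" where
  "grad f x = (\<Sum>b\<in>Basis. frechet_derivative f (at x) b *\<^sub>R b)"

definition laplacian :: "('a::euclidean_space \<Rightarrow> real) \<Rightarrow> 'a \<Rightarrow> real" where
  "laplacian f x = (\<Sum>b\<in>Basis. frechet_derivative (grad f) (at x) b \<bullet> b)"

definition C2_on :: "'a::euclidean_space set \<Rightarrow> ('a \<Rightarrow> real) \<Rightarrow> bool" where
  "C2_on U f \<longleftrightarrow> (\<forall>x\<in>U. f differentiable (at x) \<and> grad f differentiable (at x))
     \<and> (\<forall>b\<in>Basis. continuous_on U (\<lambda>x. frechet_derivative (grad f) (at x) b))"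

definition C2_closure :: "'a::euclidean_space set \<Rightarrow> ('a \<Rightarrow> real) \<Rightarrow> bool" where
  "C2_closure \<Omega> u \<longleftrightarrow> continuous_on (closure \<Omega>) u
     \<and> (\<forall>x\<in>\<Omega>. u differentiable (at x) \<and> grad u differentiable (at x))
     \<and> (\<exists>G. continuous_on (closure \<Omega>) G \<and> (\<forall>x\<in>\<Omega>. G x = grad u x))
     \<and> (\<forall>b\<in>Basis. \<exists>H. continuous_on (closure \<Omega>) H
            \<and> (\<forall>x\<in>\<Omega>. H x = frechet_derivative (grad u) (at x) b))"

definition C1_closure :: "'a::euclidean_space set \<Rightarrow> ('a \<Rightarrow> real) \<Rightarrow> bool" where
  "C1_closure \<Omega> \<psi> \<longleftrightarrow> continuous_on (closure \<Omega>) \<psi>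
     \<and> (\<forall>x\<in>\<Omega>. \<psi> differentiable (at x))
     \<and> (\<exists>G. continuous_on (closure \<Omega>) G \<and> (\<forall>x\<in>\<Omega>. G x = grad \<psi> x))"

definition domain :: "'a::euclidean_space set \<Rightarrow> bool" where
  "domain \<Omega> \<longleftrightarrow> open \<Omega> \<and> connected \<Omega> \<and> \<Omega> \<noteq> {}"

text \<open>rho is a C^2 local defining function of Omega near its boundary.
  A bounded domain has C^2 boundary iff such a rho exists.\<close>
definition C2_defining_function :: "'a::euclidean_space set \<Rightarrow> ('a \<Rightarrow> real) \<Rightarrow> bool" where
  "C2_defining_function \<Omega> \<rho> \<longleftrightarrow> (\<exists>U. open U \<and> frontier \<Omega> \<subseteq> U \<and> C2_on U \<rho>
     \<and> (\<forall>x\<in>U. x \<in> \<Omega> \<longleftrightarrow> \<rho> x < 0)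
     \<and> (\<forall>x\<in>frontier \<Omega>. \<rho> x = 0 \<and> grad \<rho> x \<noteq> 0))"

text \<open>Outward unit normal (extended to a neighbourhood of the boundary by grad rho / |grad rho|).\<close>
definition normal :: "('a::euclidean_space \<Rightarrow> real) \<Rightarrow> 'a \<Rightarrow> 'a" where
  "normal \<rho> x = (1 / norm (grad \<rho> x)) *\<^sub>R grad \<rho> x"

definition lowest_curvature :: "('a::euclidean_space \<Rightarrow> real) \<Rightarrow> 'a \<Rightarrow> real" where
  "lowest_curvature \<rho> x = Inf {(X \<bullet> frechet_derivative (normal \<rho>) (at x) X) / (norm X)\<^sup>2 | X.
        X \<bullet> normal \<rho> x = 0 \<and> X \<noteq> 0}"

definition hausdorff_approx :: "nat \<Rightarrow> real \<Rightarrow> 'a::euclidean_space set \<Rightarrow> ennreal" where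
  "hausdorff_approx d \<delta> A = (INF C \<in> {C :: nat \<Rightarrow> 'a set. A \<subseteq> (\<Union>i. C i)
        \<and> (\<forall>i. bounded (C i) \<and> diameter (C i) \<le> \<delta>)}.
      (\<Sum>i. ennreal (unit_ball_vol (real d) * (diameter (C i) / 2) ^ d)))"

definition hausdorff_measure :: "nat \<Rightarrow> 'a::euclidean_space set \<Rightarrow> ennreal" where
  "hausdorff_measure d A = (SUP \<delta> \<in> {0<..}. hausdorff_approx d \<delta> A)"

definition surface_measure :: "'a::euclidean_space set \<Rightarrow> 'a measure" where
  "surface_measure \<Omega> = measure_of (frontier \<Omega>) {A \<in> sets borel. A \<subseteq> frontier \<Omega>}
      (hausdorff_measure (DIM('a) - 1))"

text \<open>Test class: C^1(closure Omega), dense in H^1(Omega).\<close>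

definition lambda0 :: "'a::euclidean_space set \<Rightarrow> (real \<Rightarrow> real) \<Rightarrow> ('a \<Rightarrow> real) \<Rightarrow> real" where
  "lambda0 \<Omega> f u = Inf {(LINT x:\<Omega>|lborel. (norm (grad \<psi> x))\<^sup>2)
        - (LINT x:\<Omega>|lborel. deriv f (u x) * (\<psi> x)\<^sup>2) | \<psi>.
        C1_closure \<Omega> \<psi> \<and> (LINT x:\<Omega>|lborel. (\<psi> x)\<^sup>2) = 1}"

definition lambda_gamma :: "'a::euclidean_space set \<Rightarrow> ('a \<Rightarrow> real) \<Rightarrow> (real \<Rightarrow> real)
    \<Rightarrow> ('a \<Rightarrow> real) \<Rightarrow> real" where
  "lambda_gamma \<Omega> \<rho> f u = Inf {(LINT x:\<Omega>|lborel. (norm (grad \<psi> x))\<^sup>2)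
        - (LINT x:\<Omega>|lborel. deriv f (u x) * (\<psi> x)\<^sup>2)
        + (LINT x|surface_measure \<Omega>. lowest_curvature \<rho> x * (\<psi> x)\<^sup>2) | \<psi>.
        C1_closure \<Omega> \<psi> \<and> (LINT x:\<Omega>|lborel. (\<psi> x)\<^sup>2) = 1}"

definition mu_gamma :: "real \<Rightarrow> 'a::euclidean_space set \<Rightarrow> ('a \<Rightarrow> real) \<Rightarrow> real" where
  "mu_gamma a \<Omega> \<rho> = Inf {(LINT x:\<Omega>|lborel. (norm (grad \<psi> x))\<^sup>2)
        + a * (LINT x|surface_measure \<Omega>. lowest_curvature \<rho> x * (\<psi> x)\<^sup>2) | \<psi>.
        C1_closure \<Omega> \<psi> \<and> (LINT x:\<Omega>|lborel. (\<psi> x)\<^sup>2) = 1}"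

end

theory Submission
  imports Defs
begin


lemma grad_has_derivative:
  fixes f :: "'a::euclidean_space \<Rightarrow> real"
  assumes "f differentiable (at x)"
  shows "(f has_derivative (\<lambda>v. grad f x \<bullet> v)) (at x)"
proof -
  let ?L = "frechet_derivative f (at x)"
  have d: "(f has_derivative ?L) (at x)" using assms frechet_derivative_works by blast
  then have lin: "linear ?L" using has_derivative_linear by blast
  have "?L v = grad f x \<bullet> v" for v
  proof -
    have "?L v = ?L (\<Sum>b\<in>Basis. (v \<bullet> b) *\<^sub>R b)" by (simp add: euclidean_representation)
    also have "\<dots> = (\<Sum>b\<in>Basis. (v \<bullet> b) * ?L b)"
      using lin by (simp add: linear_sum linear_cmul)
    also have "\<dots> = grad f x \<bullet> v"
      unfolding grad_def by (simp add: inner_sum_right inner_commute mult.commute)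
    finally show ?thesis .
  qed
  then have "?L = (\<lambda>v. grad f x \<bullet> v)" by auto
  with d show ?thesis by simp
qed

lemma frontier_sub_closure: "frontier S \<subseteq> closure S"
  by (simp add: frontier_def)

lemma set_integrable_closure:
  fixes \<Omega> :: "'a::euclidean_space set" and g :: "'a \<Rightarrow> real"
  assumes "open \<Omega>" "bounded \<Omega>" "continuous_on (closure \<Omega>) g"
  shows "set_integrable lborel \<Omega> g"
proof -
  have "compact (closure \<Omega>)" using assms(2) by (simp add: compact_closure)
  then obtain B where B: "\<forall>x\<in>closure \<Omega>. norm (g x) \<le> B"
    using assms(3) compact_continuous_image compact_imp_bounded bounded_iff
    by (metis image_eqI)
  have m: "\<Omega> \<in> sets lborel" using assms(1) by simp
  have cont: "continuous_on \<Omega> g" using assms(3) closure_subset continuous_on_subset by blast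
  have meas: "(\<lambda>x. indicat_real \<Omega> x *\<^sub>R g x) \<in> borel_measurable lborel"
    using borel_measurable_continuous_on_indicator[OF _ cont] assms(1) by simp
  have fin: "emeasure lborel \<Omega> < \<infinity>"
    using assms(2) emeasure_bounded_finite by blast
  show ?thesis unfolding set_integrable_def
    apply (rule integrableI_bounded_set[where B=B, OF m meas fin])
    using B closure_subset
    by (auto simp: indicator_def)
qed


lemma sets_surface_measure:
  fixes \<Omega> :: "'a::euclidean_space set"
  shows "sets (surface_measure \<Omega>) = sets (restrict_space borel (frontier \<Omega>))"
    and "space (surface_measure \<Omega>) = frontier \<Omega>"
proof -
  have Fb: "frontier \<Omega> \<in> sets borel" by (simp add: frontier_closed)
  have eq: "{A \<in> sets borel. A \<subseteq> frontier \<Omega>} = sets (restrict_space borel (frontier \<Omega>))"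
    using sets_restrict_space_iff[of "frontier \<Omega>" borel] Fb by auto
  have sa: "sigma_algebra (frontier \<Omega>) (sets (restrict_space borel (frontier \<Omega>)))"
    using sets.sigma_algebra_axioms[of "restrict_space borel (frontier \<Omega>)"] by simp
  have sub: "{A \<in> sets borel. A \<subseteq> frontier \<Omega>} \<subseteq> Pow (frontier \<Omega>)" by auto
  show "sets (surface_measure \<Omega>) = sets (restrict_space borel (frontier \<Omega>))"
    unfolding surface_measure_def sets_measure_of[OF sub]
    using sigma_algebra.sigma_sets_eq[OF sa] eq by simp
  show "space (surface_measure \<Omega>) = frontier \<Omega>"
    unfolding surface_measure_def using space_measure_of[OF sub] by simp
qed

lemma surface_measurable:
  fixes \<Omega> :: "'a::euclidean_space set" and g :: "'a \<Rightarrow> real"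
  assumes "continuous_on (frontier \<Omega>) g"
  shows "g \<in> borel_measurable (surface_measure \<Omega>)"
proof -
  have "g \<in> borel_measurable (restrict_space borel (frontier \<Omega>))"
    using borel_measurable_continuous_on_restrict[OF assms] .
  then show ?thesis
    using measurable_cong_sets[OF sets_surface_measure(1) refl] by blast
qed

lemma emeasure_surface_le:
  fixes \<Omega> :: "'a::euclidean_space set"
  shows "emeasure (surface_measure \<Omega>) A \<le> hausdorff_measure (DIM('a) - 1) A"
  unfolding surface_measure_def emeasure_measure_of_conv by auto


lemma C2_def_unfold:
  assumes "C2_defining_function \<Omega> \<rho>"
  obtains U where "open U" "frontier \<Omega> \<subseteq> U" "C2_on U \<rho>" "\<forall>x\<in>U. x \<in> \<Omega> \<longleftrightarrow> \<rho> x < 0"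
    "\<forall>x\<in>frontier \<Omega>. \<rho> x = 0 \<and> grad \<rho> x \<noteq> 0"
  using assms unfolding C2_defining_function_def by blast

lemma linear_norm_bound_basis:
  fixes L :: "'a::euclidean_space \<Rightarrow> 'b::real_normed_vector"
  assumes "linear L"
  shows "norm (L v) \<le> norm v * (\<Sum>b\<in>Basis. norm (L b))"
proof -
  have "L v = (\<Sum>b\<in>Basis. (v \<bullet> b) *\<^sub>R L b)"
    using assms by (metis (no_types, lifting) euclidean_representation linear_cmul linear_sum sum.cong)
  then have "norm (L v) = norm (\<Sum>b\<in>Basis. (v \<bullet> b) *\<^sub>R L b)" by simp
  also have "\<dots> \<le> (\<Sum>b\<in>Basis. norm ((v \<bullet> b) *\<^sub>R L b))" by (rule norm_sum)
  also have "\<dots> \<le> (\<Sum>b\<in>Basis. norm v * norm (L b))"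
    by (intro sum_mono) (auto intro!: mult_right_mono simp: Basis_le_norm)
  finally show ?thesis by (simp add: sum_distrib_left)
qed

lemma exists_orth_nonzero:
  fixes n :: "'a::euclidean_space"
  assumes "DIM('a) \<ge> 2"
  shows "\<exists>X. X \<bullet> n = 0 \<and> X \<noteq> 0"
proof -
  obtain b1 :: 'a where b1: "b1 \<in> Basis" using nonempty_Basis by blast
  have "card (Basis - {b1}) \<ge> 1" using assms b1 by (simp add: card_Diff_singleton)
  then obtain b2 :: 'a where b2: "b2 \<in> Basis" "b2 \<noteq> b1"
    by (metis Diff_iff card_0_eq ex_in_conv finite_Basis finite_Diff insertI1 not_one_le_zero)
  show ?thesis
  proof (cases "n \<bullet> b1 = 0 \<and> n \<bullet> b2 = 0")
    case True
    then show ?thesis using b1 by (intro exI[of _ b1]) (auto simp: inner_commute)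
  next
    case False
    let ?X = "(n \<bullet> b2) *\<^sub>R b1 - (n \<bullet> b1) *\<^sub>R b2"
    have "?X \<bullet> n = (n \<bullet> b2) * (b1 \<bullet> n) - (n \<bullet> b1) * (b2 \<bullet> n)" by (simp add: inner_diff_left)
    then have "?X \<bullet> n = 0" by (simp add: inner_commute)
    moreover have "?X \<bullet> b1 = n \<bullet> b2" "?X \<bullet> b2 = - (n \<bullet> b1)"
      using b1 b2 by (auto simp: inner_diff_left inner_Basis)
    then have "?X \<noteq> 0" using False by auto
    ultimately show ?thesis by blast
  qed
qed

lemma curvature_lower:
  fixes \<Omega> :: "'a::euclidean_space set" and \<rho> :: "'a \<Rightarrow> real"
  assumes "DIM('a) \<ge> 2" "bounded \<Omega>" "C2_defining_function \<Omega> \<rho>"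
  shows "\<exists>K\<ge>0. \<forall>x\<in>frontier \<Omega>. lowest_curvature \<rho> x \<ge> - K"
proof -
  obtain U where U: "open U" "frontier \<Omega> \<subseteq> U" "C2_on U \<rho>" "\<forall>x\<in>U. x \<in> \<Omega> \<longleftrightarrow> \<rho> x < 0"
     "\<forall>x\<in>frontier \<Omega>. \<rho> x = 0 \<and> grad \<rho> x \<noteq> 0"
    by (rule C2_def_unfold[OF assms(3)])
  define F where "F = frontier \<Omega>"
  define g where "g = grad \<rho>"
  have cF: "compact F" unfolding F_def using assms(2)
    by (meson bounded_closure bounded_subset compact_eq_bounded_closed frontier_closed frontier_sub_closure)
  have gd: "g differentiable (at x)" if "x \<in> F" for x
    using U that unfolding C2_on_def F_def g_def by blast
  have gF: "continuous_on F g"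
    by (rule continuous_at_imp_continuous_on) (use gd differentiable_imp_continuous_within in blast)
  have gnz: "g x \<noteq> 0" if "x \<in> F" for x using U(5) that by (auto simp: F_def g_def)
  show ?thesis
  proof (cases "F = {}")
    case True
    then show ?thesis by (auto simp: F_def)
  next
    case False
    obtain x0 where x0: "x0 \<in> F" "\<forall>x\<in>F. norm (g x0) \<le> norm (g x)"
      using continuous_attains_inf[OF cF False, of "\<lambda>x. norm (g x)"] gF
      by (auto intro: continuous_intros)
    define m0 where "m0 = norm (g x0)"
    have m0: "m0 > 0" "\<forall>x\<in>F. m0 \<le> norm (g x)" using x0 gnz by (auto simp: m0_def)
    define \<phi> where "\<phi> x = (\<Sum>b\<in>Basis. norm (frechet_derivative g (at x) b))" for x
    have "continuous_on U \<phi>"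
      unfolding \<phi>_def g_def using U(3) unfolding C2_on_def
      by (intro continuous_intros) auto
    then have "continuous_on F \<phi>" using U(2) F_def continuous_on_subset by blast
    then have "bounded (\<phi> ` F)" using cF compact_continuous_image compact_imp_bounded by blast
    then obtain Bt where Bt: "\<forall>x\<in>F. norm (\<phi> x) \<le> Bt" by (auto simp: bounded_iff)
    have Bt0: "Bt \<ge> 0" using Bt x0(1) by (meson norm_ge_zero order.trans)
    define K where "K = 2 * Bt / m0"
    have K0: "K \<ge> 0" using Bt0 m0 by (simp add: K_def)
    have "lowest_curvature \<rho> x \<ge> - K" if xF: "x \<in> F" for x
    proof -
      let ?Dg = "frechet_derivative g (at x)"
      have dg: "(g has_derivative ?Dg) (at x)" using gd[OF xF] frechet_derivative_works by blast
      have lin: "linear ?Dg" using dg has_derivative_linear by blast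
      have Dgb: "norm (?Dg v) \<le> norm v * Bt" for v
      proof -
        have "norm (?Dg v) \<le> norm v * \<phi> x" unfolding \<phi>_def by (rule linear_norm_bound_basis[OF lin])
        also have "\<dots> \<le> norm v * Bt" using Bt xF by (intro mult_left_mono) auto
        finally show ?thesis .
      qed
      have gx: "g x \<noteq> 0" using gnz xF by blast
      have nx: "norm (g x) \<ge> m0" using m0 xF by blast
      have dn: "((\<lambda>y. norm (g y)) has_derivative (\<lambda>h. ?Dg h \<bullet> sgn (g x))) (at x)"
        using has_derivative_compose[OF dg has_derivative_norm[OF gx]] by simp
      have di: "((\<lambda>y. inverse (norm (g y))) has_derivative
          (\<lambda>h. - (inverse (norm (g x)) * (?Dg h \<bullet> sgn (g x)) * inverse (norm (g x))))) (at x)"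
        by (rule Deriv.has_derivative_inverse[OF _ dn]) (use gx in simp)
      define L where "L h = inverse (norm (g x)) *\<^sub>R ?Dg h
          + (- (inverse (norm (g x)) * (?Dg h \<bullet> sgn (g x)) * inverse (norm (g x)))) *\<^sub>R g x" for h
      have dnu: "((\<lambda>y. inverse (norm (g y)) *\<^sub>R g y) has_derivative L) (at x)"
        unfolding L_def using has_derivative_scaleR[OF di dg] by (simp add: add.commute)
      have nu_eq: "normal \<rho> = (\<lambda>y. inverse (norm (g y)) *\<^sub>R g y)"
        by (rule ext) (simp add: normal_def g_def divide_inverse)
      have FD: "frechet_derivative (normal \<rho>) (at x) = L"
        using frechet_derivative_at[OF dnu] nu_eq by simp
      have Lb: "norm (L h) \<le> K * norm h" for h
      proof -
        have "norm (L h) \<le> norm (inverse (norm (g x)) *\<^sub>R ?Dg h)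
            + norm ((inverse (norm (g x)) * (?Dg h \<bullet> sgn (g x)) * inverse (norm (g x))) *\<^sub>R g x)"
          unfolding L_def by (metis norm_minus_cancel norm_triangle_ineq scaleR_minus_left)
        also have "\<dots> = norm (?Dg h) / norm (g x) + \<bar>?Dg h \<bullet> sgn (g x)\<bar> / norm (g x)"
          using gx by (simp add: field_simps abs_mult)
        also have "\<dots> \<le> 2 * norm (?Dg h) / norm (g x)"
        proof -
          have "\<bar>?Dg h \<bullet> sgn (g x)\<bar> \<le> norm (?Dg h)"
            using Cauchy_Schwarz_ineq2[of "?Dg h" "sgn (g x)"] gx by (simp add: norm_sgn)
          then show ?thesis using gx by (simp add: field_simps)
        qed
        also have "\<dots> \<le> 2 * (norm h * Bt) / m0"
          using Dgb[of h] nx m0 Bt0 by (intro frac_le) auto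
        also have "\<dots> = K * norm h" by (simp add: K_def)
        finally show ?thesis .
      qed
      let ?S = "{(X \<bullet> frechet_derivative (normal \<rho>) (at x) X) / (norm X)\<^sup>2 | X. X \<bullet> normal \<rho> x = 0 \<and> X \<noteq> 0}"
      have ne: "?S \<noteq> {}" using exists_orth_nonzero[OF assms(1), of "normal \<rho> x"] by blast
      have "- K \<le> Inf ?S"
      proof (rule cInf_greatest[OF ne])
        fix y assume "y \<in> ?S"
        then obtain X where X: "X \<noteq> 0" "y = (X \<bullet> L X) / (norm X)\<^sup>2" using FD by auto
        have "\<bar>X \<bullet> L X\<bar> \<le> norm X * norm (L X)" by (rule Cauchy_Schwarz_ineq2)
        also have "\<dots> \<le> norm X * (K * norm X)" by (intro mult_left_mono Lb) auto
        finally have "- (K * (norm X)\<^sup>2) \<le> X \<bullet> L X" by (simp add: power2_eq_square algebra_simps)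
        moreover have "(norm X)\<^sup>2 > 0" using X by simp
        ultimately show "- K \<le> y" using X by (simp add: le_divide_eq)
      qed
      then show ?thesis unfolding lowest_curvature_def .
    qed
    then show ?thesis using K0 unfolding F_def by blast
  qed
qed


definition Bx :: "'a::euclidean_space \<Rightarrow> real \<Rightarrow> 'a set" where
  "Bx x0 r = box (x0 - r *\<^sub>R One) (x0 + r *\<^sub>R One)"

lemma mem_Bx: "z \<in> Bx x0 r \<longleftrightarrow> (\<forall>i\<in>Basis. \<bar>(z - x0) \<bullet> i\<bar> < r)"
  unfolding Bx_def mem_box by (auto simp: inner_diff_left abs_less_iff algebra_simps)

lemma convex_Bx: "convex (Bx x0 r)" unfolding Bx_def by (rule convex_box)
lemma open_Bx: "open (Bx x0 r)" unfolding Bx_def by (rule open_box)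

lemma Bx_sub_ball: "Bx x0 r \<subseteq> ball x0 (real DIM('a) * r)" for x0 :: "'a::euclidean_space"
proof
  fix z assume z: "z \<in> Bx x0 r"
  have "norm (z - x0) \<le> (\<Sum>i\<in>Basis. \<bar>(z - x0) \<bullet> i\<bar>)" by (rule norm_le_l1)
  also have "\<dots> < (\<Sum>i\<in>(Basis::'a set). r)"
    using z unfolding mem_Bx by (intro sum_strict_mono) auto
  also have "\<dots> = real DIM('a) * r" by simp
  finally show "z \<in> ball x0 (real DIM('a) * r)" by (simp add: dist_norm norm_minus_commute)
qed

lemma C2_rho_deriv:
  assumes "C2_on U \<rho>" "x \<in> U"
  shows "(\<rho> has_derivative (\<lambda>v. grad \<rho> x \<bullet> v)) (at x)"
  using assms unfolding C2_on_def by (intro grad_has_derivative) blast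

lemma C2_grad_cont:
  assumes "C2_on U \<rho>" "open U"
  shows "continuous_on U (grad \<rho>)"
  using assms unfolding C2_on_def
  by (intro continuous_at_imp_continuous_on) (metis differentiable_imp_continuous_within)

lemma local_patch:
  fixes \<rho> :: "'a::euclidean_space \<Rightarrow> real"
  assumes "C2_on U \<rho>" "open U" "x0 \<in> U" "grad \<rho> x0 \<noteq> 0"
  shows "\<exists>b\<in>Basis. \<exists>\<sigma>::real. (\<sigma> = 1 \<or> \<sigma> = -1) \<and> (\<exists>r>0. \<exists>m>0. \<exists>M>0.
           Bx x0 r \<subseteq> U \<and> (\<forall>z\<in>Bx x0 r. grad \<rho> z \<bullet> (\<sigma> *\<^sub>R b) \<ge> m \<and> norm (grad \<rho> z) \<le> M))"
proof -
  obtain b where b: "b \<in> Basis" "grad \<rho> x0 \<bullet> b \<noteq> 0"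
    using assms(4) by (metis euclidean_all_zero_iff)
  define \<sigma> :: real where "\<sigma> = sgn (grad \<rho> x0 \<bullet> b)"
  have \<sigma>: "\<sigma> = 1 \<or> \<sigma> = -1" using b by (auto simp: \<sigma>_def sgn_real_def)
  define m where "m = \<bar>grad \<rho> x0 \<bullet> b\<bar> / 2"
  have m: "m > 0" using b by (simp add: m_def)
  have ge: "grad \<rho> x0 \<bullet> (\<sigma> *\<^sub>R b) = 2 * m"
    by (simp add: m_def \<sigma>_def sgn_real_def abs_if)
  have c: "continuous (at x0) (grad \<rho>)"
    using C2_grad_cont[OF assms(1,2)] assms(2,3) continuous_on_eq_continuous_at by blast
  obtain d1 where d1: "d1 > 0" "\<forall>z. dist z x0 < d1 \<longrightarrow> dist (grad \<rho> z) (grad \<rho> x0) < m"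
    using c m unfolding continuous_at_eps_delta by blast
  obtain d2 where d2: "d2 > 0" "ball x0 d2 \<subseteq> U" using assms(2,3) open_contains_ball by blast
  define d where "d = min d1 d2"
  define r where "r = d / real DIM('a)"
  have r: "r > 0" using d1 d2 by (simp add: r_def d_def)
  have sub: "Bx x0 r \<subseteq> ball x0 d"
    using Bx_sub_ball[of x0 r] by (simp add: r_def)
  have Mpos: "0 < norm (grad \<rho> x0) + m" using m by (simp add: add_nonneg_pos)
  have "ball x0 d \<subseteq> ball x0 d2" unfolding d_def by (rule subset_ball) simp
  then have BU: "Bx x0 r \<subseteq> U" using sub d2(2) by blast
  have P: "\<forall>z\<in>Bx x0 r. grad \<rho> z \<bullet> (\<sigma> *\<^sub>R b) \<ge> m \<and> norm (grad \<rho> z) \<le> norm (grad \<rho> x0) + m"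
  proof
    fix z assume z: "z \<in> Bx x0 r"
    then have "dist z x0 < d1" using sub by (auto simp: d_def dist_commute)
    then have dz: "norm (grad \<rho> z - grad \<rho> x0) < m" using d1 by (simp add: dist_norm)
    have nsb: "norm (\<sigma> *\<^sub>R b) = 1" using \<sigma> b by auto
    have "\<bar>(grad \<rho> z - grad \<rho> x0) \<bullet> (\<sigma> *\<^sub>R b)\<bar> \<le> norm (grad \<rho> z - grad \<rho> x0)"
      using Cauchy_Schwarz_ineq2[of "grad \<rho> z - grad \<rho> x0" "\<sigma> *\<^sub>R b"] nsb by simp
    then have 1: "m \<le> grad \<rho> z \<bullet> (\<sigma> *\<^sub>R b)" using dz ge by (simp add: inner_diff_left abs_le_iff right_diff_distrib)
    have 2: "norm (grad \<rho> z) \<le> norm (grad \<rho> x0) + m"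
      using dz norm_triangle_ineq2[of "grad \<rho> z" "grad \<rho> x0"] by linarith
    show "grad \<rho> z \<bullet> (\<sigma> *\<^sub>R b) \<ge> m \<and> norm (grad \<rho> z) \<le> norm (grad \<rho> x0) + m" using 1 2 by blast
  qed
  show ?thesis using b(1) \<sigma> r m Mpos BU P by blast
qed


lemma amgm_aux:
  fixes g q h :: real
  assumes "h > 0" "g \<ge> 0"
  shows "g * \<bar>q\<bar> \<le> (h/2) * g\<^sup>2 + (1/(2*h)) * q\<^sup>2"
proof -
  have "0 \<le> (h * g - \<bar>q\<bar>)\<^sup>2" by simp
  then have "2 * h * g * \<bar>q\<bar> \<le> h\<^sup>2 * g\<^sup>2 + q\<^sup>2" by (simp add: power2_eq_square algebra_simps)
  then show ?thesis using assms by (simp add: field_simps power2_eq_square)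
qed

lemma disc_trace:
  fixes p gg :: "nat \<Rightarrow> real" and s h :: real and J :: nat
  assumes J: "J \<ge> 1" and s: "s > 0" and h: "h = real J * s"
    and d: "\<And>i. i < J \<Longrightarrow> \<bar>p i - p (Suc i)\<bar> \<le> s * gg i"
    and g0: "\<And>i. gg i \<ge> 0"
  shows "(p 0)\<^sup>2 \<le> (\<Sum>i<J. s * ((h/2) * (gg i)\<^sup>2 + (1/h) * (p i)\<^sup>2 + (2/h) * (p (Suc i))\<^sup>2))"
proof -
  have hpos: "h > 0" using J s h by simp
  define \<Delta> where "\<Delta> = (\<Sum>i<J. \<bar>(p i)\<^sup>2 - (p (Suc i))\<^sup>2\<bar>)"
  have step: "j \<le> J \<Longrightarrow> (p 0)\<^sup>2 \<le> (p j)\<^sup>2 + (\<Sum>i<j. \<bar>(p i)\<^sup>2 - (p (Suc i))\<^sup>2\<bar>)" for j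
  proof (induction j)
    case 0 then show ?case by simp
  next
    case (Suc j)
    then have "(p 0)\<^sup>2 \<le> (p j)\<^sup>2 + (\<Sum>i<j. \<bar>(p i)\<^sup>2 - (p (Suc i))\<^sup>2\<bar>)" by simp
    then show ?case by simp
  qed
  have step2: "j \<le> J \<Longrightarrow> (p 0)\<^sup>2 \<le> (p j)\<^sup>2 + \<Delta>" for j
  proof -
    assume j: "j \<le> J"
    have "(\<Sum>i<j. \<bar>(p i)\<^sup>2 - (p (Suc i))\<^sup>2\<bar>) \<le> \<Delta>"
      unfolding \<Delta>_def using j by (intro sum_mono2) auto
    then show ?thesis using step[OF j] by linarith
  qed
  have "(\<Sum>i<J. (p 0)\<^sup>2) \<le> (\<Sum>i<J. (p (Suc i))\<^sup>2 + \<Delta>)"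
    by (intro sum_mono step2) auto
  then have "real J * (p 0)\<^sup>2 \<le> (\<Sum>i<J. (p (Suc i))\<^sup>2) + real J * \<Delta>"
    by (simp add: sum.distrib)
  then have A0: "(p 0)\<^sup>2 \<le> (1 / real J) * (\<Sum>i<J. (p (Suc i))\<^sup>2) + \<Delta>"
    using J by (simp add: field_simps)
  have "(s/h) = 1 / real J" using s h J by simp
  then have A: "(p 0)\<^sup>2 \<le> (\<Sum>i<J. (s/h) * (p (Suc i))\<^sup>2) + \<Delta>"
    using A0 by (simp add: sum_distrib_left)
  have B: "\<bar>(p i)\<^sup>2 - (p (Suc i))\<^sup>2\<bar> \<le> s * ((h/2) * (gg i)\<^sup>2 + (1/h) * (p i)\<^sup>2 + (1/h) * (p (Suc i))\<^sup>2)"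
    if i: "i < J" for i
  proof -
    have "\<bar>(p i)\<^sup>2 - (p (Suc i))\<^sup>2\<bar> = \<bar>p i - p (Suc i)\<bar> * \<bar>p i + p (Suc i)\<bar>"
      by (simp add: power2_eq_square abs_mult[symmetric] algebra_simps)
    also have "\<dots> \<le> s * gg i * \<bar>p i + p (Suc i)\<bar>" by (intro mult_right_mono d i) auto
    also have "\<dots> = s * (gg i * \<bar>p i + p (Suc i)\<bar>)" by simp
    also have "\<dots> \<le> s * ((h/2) * (gg i)\<^sup>2 + (1/(2*h)) * (p i + p (Suc i))\<^sup>2)"
      using amgm_aux[OF hpos g0] s by (intro mult_left_mono) auto
    also have "\<dots> \<le> s * ((h/2) * (gg i)\<^sup>2 + (1/h) * (p i)\<^sup>2 + (1/h) * (p (Suc i))\<^sup>2)"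
    proof -
      have "(p i + p (Suc i))\<^sup>2 \<le> 2 * (p i)\<^sup>2 + 2 * (p (Suc i))\<^sup>2"
        using sum_squares_ge_zero[of "p i - p (Suc i)" 0] by (simp add: power2_eq_square algebra_simps)
      then have "(1/(2*h)) * (p i + p (Suc i))\<^sup>2 \<le> (1/(2*h)) * (2 * (p i)\<^sup>2 + 2 * (p (Suc i))\<^sup>2)"
        using hpos by (intro mult_left_mono) auto
      also have "\<dots> = (1/h) * (p i)\<^sup>2 + (1/h) * (p (Suc i))\<^sup>2" using hpos by (simp add: field_simps)
      finally show ?thesis using s by (intro mult_left_mono) auto
    qed
    finally show ?thesis .
  qed
  have "\<Delta> \<le> (\<Sum>i<J. s * ((h/2) * (gg i)\<^sup>2 + (1/h) * (p i)\<^sup>2 + (1/h) * (p (Suc i))\<^sup>2))"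
    unfolding \<Delta>_def by (intro sum_mono B) auto
  with A have "(p 0)\<^sup>2 \<le> (\<Sum>i<J. (s/h) * (p (Suc i))\<^sup>2) + (\<Sum>i<J. s * ((h/2) * (gg i)\<^sup>2 + (1/h) * (p i)\<^sup>2 + (1/h) * (p (Suc i))\<^sup>2))"
    by linarith
  also have "\<dots> = (\<Sum>i<J. s * ((h/2) * (gg i)\<^sup>2 + (1/h) * (p i)\<^sup>2 + (2/h) * (p (Suc i))\<^sup>2))"
    by (simp add: sum.distrib[symmetric] algebra_simps add_divide_distrib)
  finally show ?thesis .
qed


definition grid_idx :: "'a::euclidean_space \<Rightarrow> real \<Rightarrow> 'a \<Rightarrow> 'a \<Rightarrow> int" where
  "grid_idx b s x = restrict (\<lambda>i. \<lfloor>(x \<bullet> i) / s\<rfloor>) (Basis - {b})"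

definition lat :: "'a::euclidean_space \<Rightarrow> 'a \<Rightarrow> 'a" where
  "lat b v = v - (v \<bullet> b) *\<^sub>R b"

lemma norm_lat_le:
  fixes b v :: "'a::euclidean_space"
  assumes "b \<in> Basis"
  shows "norm (lat b v) \<le> (\<Sum>i\<in>Basis - {b}. \<bar>v \<bullet> i\<bar>)"
proof -
  have "lat b v = (\<Sum>i\<in>Basis. (v \<bullet> i) *\<^sub>R i) - (v \<bullet> b) *\<^sub>R b"
    unfolding lat_def by (simp add: euclidean_representation)
  also have "\<dots> = (\<Sum>i\<in>Basis - {b}. (v \<bullet> i) *\<^sub>R i)"
    using assms by (simp add: sum_diff1)
  finally have "norm (lat b v) = norm (\<Sum>i\<in>Basis - {b}. (v \<bullet> i) *\<^sub>R i)" by simp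
  also have "\<dots> \<le> (\<Sum>i\<in>Basis - {b}. norm ((v \<bullet> i) *\<^sub>R i))" by (rule norm_sum)
  also have "\<dots> = (\<Sum>i\<in>Basis - {b}. \<bar>v \<bullet> i\<bar>)" by (intro sum.cong) auto
  finally show ?thesis .
qed

lemma norm_le_lat:
  fixes b v :: "'a::euclidean_space"
  assumes "b \<in> Basis"
  shows "norm v \<le> norm (lat b v) + \<bar>v \<bullet> b\<bar>"
proof -
  have "v = lat b v + (v \<bullet> b) *\<^sub>R b" by (simp add: lat_def)
  then have "norm v \<le> norm (lat b v) + norm ((v \<bullet> b) *\<^sub>R b)" by (metis norm_triangle_ineq)
  then show ?thesis using assms by simp
qed

lemma lat_inner: "i \<in> Basis \<Longrightarrow> i \<noteq> b \<Longrightarrow> b \<in> Basis \<Longrightarrow> lat b v \<bullet> i = v \<bullet> i"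
  by (simp add: lat_def inner_diff_left inner_Basis)

definition cellset :: "'a::euclidean_space set \<Rightarrow> 'a \<Rightarrow> 'a \<Rightarrow> real \<Rightarrow> real \<Rightarrow> ('a \<Rightarrow> int) \<Rightarrow> 'a set" where
  "cellset F b x0 r s k = {x \<in> F \<inter> Bx x0 (r/2). grid_idx b s x = k}"

lemma floor_eq_close:
  assumes h: "\<lfloor>a::real\<rfloor> = \<lfloor>a'\<rfloor>" shows "\<bar>a - a'\<bar> < 1"
proof -
  have 1: "real_of_int \<lfloor>a\<rfloor> \<le> a" "a < real_of_int \<lfloor>a\<rfloor> + 1" by linarith+
  have 2: "real_of_int \<lfloor>a\<rfloor> \<le> a'" "a' < real_of_int \<lfloor>a\<rfloor> + 1" unfolding h by linarith+
  show ?thesis unfolding abs_less_iff using 1 2 by linarith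
qed

lemma Bx_mono: assumes "r1 \<le> r2" shows "Bx x0 r1 \<subseteq> Bx x0 r2"
proof
  fix z assume "z \<in> Bx x0 r1"
  then have "\<forall>i\<in>Basis. \<bar>(z - x0) \<bullet> i\<bar> < r1" by (simp add: mem_Bx)
  then have "\<forall>i\<in>Basis. \<bar>(z - x0) \<bullet> i\<bar> < r2" using assms by force
  then show "z \<in> Bx x0 r2" by (simp add: mem_Bx)
qed

lemma card_Basis_minus: "b \<in> (Basis::'a::euclidean_space set) \<Longrightarrow> card (Basis - {b}) = DIM('a) - 1"
  by (simp add: card_Diff_singleton)

locale patch =
  fixes \<Omega> :: "'a::euclidean_space set" and \<rho> :: "'a \<Rightarrow> real" and U :: "'a set"
    and x0 b :: 'a and \<sigma> r m M :: real
  assumes op: "open \<Omega>" and bd: "bounded \<Omega>" and Uo: "open U" and FU: "frontier \<Omega> \<subseteq> U"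
    and C2: "C2_on U \<rho>" and inU: "\<forall>x\<in>U. x \<in> \<Omega> \<longleftrightarrow> \<rho> x < 0"
    and bdry: "\<forall>x\<in>frontier \<Omega>. \<rho> x = 0"
    and b: "b \<in> Basis" and \<sigma>: "\<sigma> = 1 \<or> \<sigma> = -1" and r: "r > 0" and m: "m > 0" and M: "M > 0"
    and BU: "Bx x0 r \<subseteq> U" and gm: "\<forall>z\<in>Bx x0 r. grad \<rho> z \<bullet> (\<sigma> *\<^sub>R b) \<ge> m"
    and gM: "\<forall>z\<in>Bx x0 r. norm (grad \<rho> z) \<le> M"
begin

lemma sig_sq: "\<sigma> * \<sigma> = 1" using \<sigma> by auto
lemma norm_e: "norm (\<sigma> *\<^sub>R b) = 1" using \<sigma> b by auto
lemma e_b: "(\<sigma> *\<^sub>R b) \<bullet> b = \<sigma>" using b by simp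

lemma rho_lip:
  assumes "z1 \<in> Bx x0 r" "z2 \<in> Bx x0 r"
  shows "\<bar>\<rho> z1 - \<rho> z2\<bar> \<le> M * norm (z1 - z2)"
proof -
  have "norm (\<rho> z1 - \<rho> z2) \<le> M * norm (z1 - z2)"
  proof (rule differentiable_bound[OF convex_Bx _ _ assms])
    fix z assume z: "z \<in> Bx x0 r"
    show "(\<rho> has_derivative (\<lambda>v. grad \<rho> z \<bullet> v)) (at z within Bx x0 r)"
      using C2_rho_deriv[OF C2] BU z has_derivative_at_withinI by blast
    show "onorm (\<lambda>v. grad \<rho> z \<bullet> v) \<le> M"
    proof (rule onorm_le)
      fix v
      have "norm (grad \<rho> z \<bullet> v) \<le> norm (grad \<rho> z) * norm v" by (simp add: Cauchy_Schwarz_ineq2)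
      also have "\<dots> \<le> M * norm v" using gM z by (intro mult_right_mono) auto
      finally show "norm (grad \<rho> z \<bullet> v) \<le> M * norm v" .
    qed
  qed
  then show ?thesis by simp
qed

lemma rho_mono:
  assumes z: "z \<in> Bx x0 r" and z': "z + \<tau> *\<^sub>R (\<sigma> *\<^sub>R b) \<in> Bx x0 r" and \<tau>: "\<tau> \<ge> 0"
  shows "\<rho> z + m * \<tau> \<le> \<rho> (z + \<tau> *\<^sub>R (\<sigma> *\<^sub>R b))"
proof (cases "\<tau> = 0")
  case True then show ?thesis by simp
next
  case False
  then have tp: "\<tau> > 0" using \<tau> by simp
  let ?e = "\<sigma> *\<^sub>R b"
  have inB: "z + t *\<^sub>R ?e \<in> Bx x0 r" if "0 \<le> t" "t \<le> \<tau>" for t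
  proof -
    have "z + t *\<^sub>R ?e = (1 - t/\<tau>) *\<^sub>R z + (t/\<tau>) *\<^sub>R (z + \<tau> *\<^sub>R ?e)"
      using tp by (simp add: algebra_simps)
    moreover have "(1 - t/\<tau>) *\<^sub>R z + (t/\<tau>) *\<^sub>R (z + \<tau> *\<^sub>R ?e) \<in> Bx x0 r"
      using that tp by (intro convexD[OF convex_Bx z z']) (auto simp: divide_le_eq_1_pos)
    ultimately show ?thesis by simp
  qed
  have D: "DERIV (\<lambda>t. \<rho> (z + t *\<^sub>R ?e)) t :> grad \<rho> (z + t *\<^sub>R ?e) \<bullet> ?e"
    if "0 \<le> t" "t \<le> \<tau>" for t
  proof -
    have d1: "((\<lambda>t. z + t *\<^sub>R ?e) has_derivative (\<lambda>h. h *\<^sub>R ?e)) (at t)"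
      by (auto intro!: derivative_eq_intros)
    have d2: "(\<rho> has_derivative (\<lambda>v. grad \<rho> (z + t *\<^sub>R ?e) \<bullet> v)) (at (z + t *\<^sub>R ?e))"
      using C2_rho_deriv[OF C2] BU inB[OF that] by blast
    have "((\<lambda>t. \<rho> (z + t *\<^sub>R ?e)) has_derivative (\<lambda>h. grad \<rho> (z + t *\<^sub>R ?e) \<bullet> (h *\<^sub>R ?e))) (at t)"
      using has_derivative_compose[OF d1 d2] by simp
    moreover have "(\<lambda>h. grad \<rho> (z + t *\<^sub>R ?e) \<bullet> (h *\<^sub>R ?e)) = (*) (grad \<rho> (z + t *\<^sub>R ?e) \<bullet> ?e)"
      by (rule ext) (simp add: mult.commute)
    ultimately show ?thesis unfolding has_field_derivative_def by simp
  qed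
  obtain \<xi> where \<xi>: "0 < \<xi>" "\<xi> < \<tau>"
    and eq: "\<rho> (z + \<tau> *\<^sub>R ?e) - \<rho> (z + 0 *\<^sub>R ?e) = (\<tau> - 0) * (grad \<rho> (z + \<xi> *\<^sub>R ?e) \<bullet> ?e)"
    using MVT2[OF tp, of "\<lambda>t. \<rho> (z + t *\<^sub>R ?e)" "\<lambda>t. grad \<rho> (z + t *\<^sub>R ?e) \<bullet> ?e"] D by auto
  have "grad \<rho> (z + \<xi> *\<^sub>R ?e) \<bullet> ?e \<ge> m" using gm inB[of \<xi>] \<xi> by auto
  then have "m * \<tau> \<le> \<tau> * (grad \<rho> (z + \<xi> *\<^sub>R ?e) \<bullet> ?e)" using tp by (simp add: mult.commute)
  then show ?thesis using eq by simp
qed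

lemma bdry_lip:
  assumes x: "x \<in> frontier \<Omega>" "x \<in> Bx x0 r" and x': "x' \<in> frontier \<Omega>" "x' \<in> Bx x0 r"
  shows "m * \<bar>(x - x') \<bullet> b\<bar> \<le> M * norm (lat b (x - x'))"
proof -
  define \<Delta> where "\<Delta> = (x - x') \<bullet> b"
  define y where "y = x' + \<Delta> *\<^sub>R b"
  have yB: "y \<in> Bx x0 r"
    unfolding mem_Bx
  proof
    fix i :: 'a assume i: "i \<in> Basis"
    show "\<bar>(y - x0) \<bullet> i\<bar> < r"
    proof (cases "i = b")
      case True
      then have "(y - x0) \<bullet> i = (x - x0) \<bullet> i" using b
        by (simp add: y_def \<Delta>_def inner_diff_left inner_add_left)
      then show ?thesis using x(2) i unfolding mem_Bx by simp
    next
      case False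
      then have "(y - x0) \<bullet> i = (x' - x0) \<bullet> i" using b i
        by (simp add: y_def inner_diff_left inner_add_left inner_Basis)
      then show ?thesis using x'(2) i unfolding mem_Bx by simp
    qed
  qed
  have rx: "\<rho> x = 0" "\<rho> x' = 0" using bdry x x' by auto
  have low: "m * \<bar>\<Delta>\<bar> \<le> \<bar>\<rho> y\<bar>"
  proof (cases "\<sigma> * \<Delta> \<ge> 0")
    case True
    have "y = x' + (\<sigma> * \<Delta>) *\<^sub>R (\<sigma> *\<^sub>R b)" using sig_sq by (simp add: y_def algebra_simps)
    then have "\<rho> x' + m * (\<sigma> * \<Delta>) \<le> \<rho> y" using rho_mono[OF x'(2), of "\<sigma> * \<Delta>"] yB True by simp
    moreover have "\<bar>\<Delta>\<bar> = \<sigma> * \<Delta>" using True \<sigma> by auto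
    ultimately show ?thesis using rx by simp
  next
    case False
    have "x' = y + (- \<sigma> * \<Delta>) *\<^sub>R (\<sigma> *\<^sub>R b)" using sig_sq by (simp add: y_def algebra_simps)
    then have "\<rho> y + m * (- \<sigma> * \<Delta>) \<le> \<rho> x'" using rho_mono[OF yB, of "- \<sigma> * \<Delta>"] x'(2) False by simp
    moreover have "\<bar>\<Delta>\<bar> = - \<sigma> * \<Delta>" using False \<sigma> by auto
    ultimately show ?thesis using rx by simp
  qed
  have "\<bar>\<rho> y - \<rho> x\<bar> \<le> M * norm (y - x)" by (rule rho_lip[OF yB x(2)])
  moreover have "y - x = - lat b (x - x')" by (simp add: y_def lat_def \<Delta>_def algebra_simps)
  ultimately have "\<bar>\<rho> y\<bar> \<le> M * norm (lat b (x - x'))" using rx by simp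
  with low show ?thesis unfolding \<Delta>_def by linarith
qed

lemma cell_diam:
  assumes s: "s > 0" and x: "x \<in> cellset (frontier \<Omega>) b x0 r s k" and x': "x' \<in> cellset (frontier \<Omega>) b x0 r s k"
  shows "norm (x - x') \<le> (1 + M/m) * real DIM('a) * s"
proof -
  have xs: "x \<in> frontier \<Omega>" "x \<in> Bx x0 r" "x' \<in> frontier \<Omega>" "x' \<in> Bx x0 r"
    and gi: "grid_idx b s x = grid_idx b s x'"
    using x x' Bx_mono[of "r/2" r x0] r unfolding cellset_def by auto
  have ci: "\<bar>(x - x') \<bullet> i\<bar> \<le> s" if i: "i \<in> Basis - {b}" for i
  proof -
    have "\<lfloor>(x \<bullet> i) / s\<rfloor> = \<lfloor>(x' \<bullet> i) / s\<rfloor>"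
      using fun_cong[OF gi, of i] i unfolding grid_idx_def by simp
    then have "\<bar>(x \<bullet> i) / s - (x' \<bullet> i) / s\<bar> < 1" by (rule floor_eq_close)
    then have "\<bar>(x \<bullet> i) - (x' \<bullet> i)\<bar> < s" using s
      by (simp add: diff_divide_distrib[symmetric] abs_divide)
    then show ?thesis by (simp add: inner_diff_left)
  qed
  have "norm (lat b (x - x')) \<le> (\<Sum>i\<in>Basis - {b}. \<bar>(x - x') \<bullet> i\<bar>)" by (rule norm_lat_le[OF b])
  also have "\<dots> \<le> (\<Sum>i\<in>Basis - {b}. s)" by (intro sum_mono ci)
  also have "\<dots> \<le> real DIM('a) * s" using s card_Basis_minus[OF b] by simp
  finally have L: "norm (lat b (x - x')) \<le> real DIM('a) * s" .
  have "m * \<bar>(x - x') \<bullet> b\<bar> \<le> M * norm (lat b (x - x'))" by (rule bdry_lip[OF xs])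
  also have "\<dots> \<le> M * (real DIM('a) * s)" using L M by (intro mult_left_mono) auto
  finally have "\<bar>(x - x') \<bullet> b\<bar> \<le> M / m * (real DIM('a) * s)" using m by (simp add: field_simps)
  then have "norm (x - x') \<le> real DIM('a) * s + M / m * (real DIM('a) * s)"
    using norm_le_lat[OF b, of "x - x'"] L by linarith
  then show ?thesis by (simp add: algebra_simps)
qed

lemma cell_sub:
  assumes s: "s > 0" and mm: "mm \<ge> (1::nat)" and x: "x \<in> cellset (frontier \<Omega>) b x0 r s k"
  shows "grid_idx b (s / real mm) x \<in> (\<Pi>\<^sub>E i\<in>Basis - {b}. {int mm * k i ..< int mm * k i + int mm})"
proof -
  have gi: "grid_idx b s x = k" using x unfolding cellset_def by auto
  show ?thesis
  proof (rule PiE_I)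
    fix i assume i: "i \<in> Basis - {b}"
    have ki: "k i = \<lfloor>(x \<bullet> i) / s\<rfloor>" using fun_cong[OF gi, of i] i unfolding grid_idx_def by simp
    define a where "a = (x \<bullet> i) / s"
    have eq: "(x \<bullet> i) / (s / real mm) = real mm * a" using s mm by (simp add: a_def field_simps)
    have a1: "real_of_int (k i) \<le> a" "a < real_of_int (k i) + 1" using ki by (auto simp: a_def)
    have "real mm * real_of_int (k i) \<le> real mm * a" using a1 by (intro mult_left_mono) auto
    then have lo: "int mm * k i \<le> \<lfloor>real mm * a\<rfloor>" by (metis le_floor_iff of_int_mult of_int_of_nat_eq)
    have "real mm * a < real mm * (real_of_int (k i) + 1)" using a1 mm by (intro mult_strict_left_mono) auto
    then have hi: "\<lfloor>real mm * a\<rfloor> < int mm * k i + int mm"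
      by (simp add: floor_less_iff algebra_simps)
    show "grid_idx b (s / real mm) x i \<in> {int mm * k i ..< int mm * k i + int mm}"
      using i lo hi eq unfolding grid_idx_def by simp
  next
    fix i assume ni: "i \<notin> Basis - {b}"
    show "grid_idx b (s / real mm) x i = undefined" unfolding grid_idx_def restrict_def
      using ni by (simp only: if_False)
  qed
qed

lemma cell_in_finer:
  assumes s: "s > 0" and mm: "mm \<ge> (1::nat)" and x: "x \<in> cellset (frontier \<Omega>) b x0 r s k"
  shows "x \<in> cellset (frontier \<Omega>) b x0 r (s / real mm) (grid_idx b (s / real mm) x)"
  using x unfolding cellset_def by auto

lemma cell_hausdorff:
  assumes dim: "DIM('a) \<ge> 2" and s: "s > 0"
  shows "hausdorff_measure (DIM('a) - 1) (cellset (frontier \<Omega>) b x0 r s k)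
     \<le> ennreal (unit_ball_vol (real (DIM('a) - 1)) * ((1 + M/m) * real DIM('a) * s / 2) ^ (DIM('a) - 1))"
proof -
  define d where "d = DIM('a) - 1"
  define cc where "cc = (1 + M/m) * real DIM('a)"
  define \<omega> where "\<omega> = unit_ball_vol (real d)"
  have d1: "d \<ge> 1" using dim by (simp add: d_def)
  have \<omega>0: "\<omega> \<ge> 0" by (simp add: \<omega>_def)
  have cc0: "cc > 0" using m M by (simp add: cc_def add_pos_nonneg)
  define A where "A = cellset (frontier \<Omega>) b x0 r s k"
  have bF: "bounded (frontier \<Omega>)"
    using bd by (meson bounded_closure bounded_subset frontier_sub_closure)
  have "hausdorff_approx d \<delta> A \<le> ennreal (\<omega> * (cc * s / 2) ^ d)" if \<delta>: "\<delta> > 0" for \<delta>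
  proof -
    define mm :: nat where "mm = nat \<lceil>cc * s / \<delta>\<rceil> + 1"
    have mm1: "mm \<ge> 1" by (simp add: mm_def)
    have "cc * s / \<delta> \<le> real mm" unfolding mm_def by linarith
    then have mmd: "cc * (s / real mm) \<le> \<delta>" using \<delta> mm1 by (simp add: field_simps)
    define SUB where "SUB = (\<Pi>\<^sub>E i\<in>Basis - {b}. {int mm * k i ..< int mm * k i + int mm})"
    have finS: "finite SUB" unfolding SUB_def by (intro finite_PiE) auto
    have cardS: "card SUB = mm ^ d"
      unfolding SUB_def using card_Basis_minus[OF b] by (simp add: card_PiE d_def)
    obtain hh where hh: "bij_betw hh {0..<card SUB} SUB" using ex_bij_betw_nat_finite[OF finS] by blast
    define C where "C i = (if i < card SUB then cellset (frontier \<Omega>) b x0 r (s / real mm) (hh i) else {})" for i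
    have sm: "s / real mm > 0" using s mm1 by simp
    have cover: "A \<subseteq> (\<Union>i. C i)"
    proof
      fix x assume x: "x \<in> A"
      have "grid_idx b (s / real mm) x \<in> SUB" unfolding SUB_def using cell_sub[OF s mm1] x A_def by blast
      then obtain i where i: "i < card SUB" "hh i = grid_idx b (s / real mm) x"
        using hh unfolding bij_betw_def by (metis atLeastLessThan_iff imageE)
      then have "x \<in> C i" unfolding C_def using cell_in_finer[OF s mm1] x A_def by simp
      then show "x \<in> (\<Union>i. C i)" by blast
    qed
    have diamC: "diameter (C i) \<le> cc * (s / real mm)" for i
    proof (rule diameter_le)
      have "0 \<le> cc * (s / real mm)" using cc0 sm by (intro mult_nonneg_nonneg) auto
      then show "C i \<noteq> {} \<or> 0 \<le> cc * (s / real mm)" by blast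
      fix x y assume xy: "x \<in> C i" "y \<in> C i"
      then have "i < card SUB" by (auto simp: C_def split: if_splits)
      then show "norm (x - y) \<le> cc * (s / real mm)"
        using cell_diam[OF sm, of x "hh i" y] xy by (simp add: C_def cc_def)
    qed
    have bC: "bounded (C i)" for i
      unfolding C_def cellset_def by (rule bounded_subset[OF bF]) auto
    have "C \<in> {C :: nat \<Rightarrow> 'a set. A \<subseteq> (\<Union>i. C i) \<and> (\<forall>i. bounded (C i) \<and> diameter (C i) \<le> \<delta>)}"
      using cover bC diamC mmd by (auto intro: order.trans)
    then have "hausdorff_approx d \<delta> A \<le> (\<Sum>i. ennreal (unit_ball_vol (real d) * (diameter (C i) / 2) ^ d))"
      unfolding hausdorff_approx_def by (rule INF_lower)
    also have "\<dots> = (\<Sum>i<card SUB. ennreal (unit_ball_vol (real d) * (diameter (C i) / 2) ^ d))"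
      by (rule suminf_finite) (use d1 in \<open>auto simp: C_def\<close>)
    also have "\<dots> \<le> (\<Sum>i<card SUB. ennreal (\<omega> * (cc * (s / real mm) / 2) ^ d))"
    proof (rule sum_mono)
      fix i
      have "(diameter (C i) / 2) ^ d \<le> (cc * (s / real mm) / 2) ^ d"
        by (rule power_mono) (use diamC[of i] diameter_ge_0[OF bC] in auto)
      then show "ennreal (unit_ball_vol (real d) * (diameter (C i) / 2) ^ d) \<le> ennreal (\<omega> * (cc * (s / real mm) / 2) ^ d)"
        by (intro ennreal_leI mult_left_mono) (auto simp: \<omega>_def)
    qed
    also have "\<dots> = ennreal (real (mm ^ d) * (\<omega> * (cc * (s / real mm) / 2) ^ d))"
      using cardS \<omega>0 by (simp add: ennreal_mult' ennreal_of_nat_eq_real_of_nat)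
    also have "real (mm ^ d) * (\<omega> * (cc * (s / real mm) / 2) ^ d) = \<omega> * (cc * s / 2) ^ d"
      using mm1 by (simp add: power_divide power_mult_distrib field_simps)
    finally show ?thesis .
  qed
  then have "hausdorff_measure d A \<le> ennreal (\<omega> * (cc * s / 2) ^ d)"
    unfolding hausdorff_measure_def by (intro SUP_least) auto
  then show ?thesis by (simp add: A_def d_def \<omega>_def cc_def)
qed

end


definition cube_lo :: "'a::euclidean_space \<Rightarrow> real \<Rightarrow> 'a \<Rightarrow> ('a \<Rightarrow> int) \<Rightarrow> real \<Rightarrow> real \<Rightarrow> 'a" where
  "cube_lo b \<sigma> x k s T = (\<Sum>j\<in>Basis. (if j = b then x \<bullet> b - \<sigma> * T - (1 + \<sigma>) / 2 * s else s * real_of_int (k j)) *\<^sub>R j)"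

definition cube :: "'a::euclidean_space \<Rightarrow> real \<Rightarrow> 'a \<Rightarrow> ('a \<Rightarrow> int) \<Rightarrow> real \<Rightarrow> real \<Rightarrow> 'a set" where
  "cube b \<sigma> x k s T = box (cube_lo b \<sigma> x k s T) (cube_lo b \<sigma> x k s T + s *\<^sub>R One)"

lemma cube_lo_inner:
  assumes "j \<in> Basis"
  shows "cube_lo b \<sigma> x k s T \<bullet> j = (if j = b then x \<bullet> b - \<sigma> * T - (1 + \<sigma>) / 2 * s else s * real_of_int (k j))"
proof -
  have "cube_lo b \<sigma> x k s T \<bullet> j = (\<Sum>j'\<in>Basis. (if j' = b then x \<bullet> b - \<sigma> * T - (1 + \<sigma>) / 2 * s else s * real_of_int (k j')) * (j' \<bullet> j))"
    unfolding cube_lo_def by (simp add: inner_sum_left)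
  also have "\<dots> = (\<Sum>j'\<in>Basis. if j' = j then (if j' = b then x \<bullet> b - \<sigma> * T - (1 + \<sigma>) / 2 * s else s * real_of_int (k j')) else 0)"
    using assms by (intro sum.cong) (auto simp: inner_Basis)
  also have "\<dots> = (if j = b then x \<bullet> b - \<sigma> * T - (1 + \<sigma>) / 2 * s else s * real_of_int (k j))"
    using assms by (simp add: sum.delta')
  finally show ?thesis .
qed

lemma mem_cube:
  fixes b :: "'a::euclidean_space"
  assumes b: "b \<in> Basis" and \<sigma>: "\<sigma> = 1 \<or> \<sigma> = -1"
  shows "z \<in> cube b \<sigma> x k s T \<longleftrightarrow> (\<forall>j\<in>Basis - {b}. s * real_of_int (k j) < z \<bullet> j \<and> z \<bullet> j < s * real_of_int (k j) + s)
     \<and> T < \<sigma> * (x \<bullet> b - z \<bullet> b) \<and> \<sigma> * (x \<bullet> b - z \<bullet> b) < T + s"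
proof -
  have "z \<in> cube b \<sigma> x k s T \<longleftrightarrow> (\<forall>j\<in>Basis. cube_lo b \<sigma> x k s T \<bullet> j < z \<bullet> j \<and> z \<bullet> j < cube_lo b \<sigma> x k s T \<bullet> j + s)"
    unfolding cube_def mem_box by (simp add: inner_add_left)
  also have "\<dots> \<longleftrightarrow> (\<forall>j\<in>Basis - {b}. s * real_of_int (k j) < z \<bullet> j \<and> z \<bullet> j < s * real_of_int (k j) + s)
     \<and> (x \<bullet> b - \<sigma> * T - (1 + \<sigma>) / 2 * s < z \<bullet> b \<and> z \<bullet> b < x \<bullet> b - \<sigma> * T - (1 + \<sigma>) / 2 * s + s)"
    using b by (auto simp: cube_lo_inner)
  also have "(x \<bullet> b - \<sigma> * T - (1 + \<sigma>) / 2 * s < z \<bullet> b \<and> z \<bullet> b < x \<bullet> b - \<sigma> * T - (1 + \<sigma>) / 2 * s + s)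
      \<longleftrightarrow> (T < \<sigma> * (x \<bullet> b - z \<bullet> b) \<and> \<sigma> * (x \<bullet> b - z \<bullet> b) < T + s)"
    using \<sigma> by (auto simp: algebra_simps)
  finally show ?thesis .
qed

lemma cube_measure:
  fixes b :: "'a::euclidean_space"
  assumes "s > 0"
  shows "emeasure lborel (cube b \<sigma> x k s T) = ennreal (s ^ DIM('a))"
  unfolding cube_def using assms by (simp add: inner_add_left)

lemma int_between_unique:
  fixes s y :: real and k k' :: int
  assumes "s > 0" "s * k < y" "y < s * k + s" "s * k' < y" "y < s * k' + s"
  shows "k = k'"
proof -
  have "real_of_int k < y / s" "y / s < real_of_int k + 1" "real_of_int k' < y / s" "y / s < real_of_int k' + 1"
    using assms by (auto simp: field_simps)
  then have "real_of_int k < real_of_int k' + 1" "real_of_int k' < real_of_int k + 1" by linarith+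
  then show ?thesis by linarith
qed

lemma cube_disjoint:
  fixes b :: "'a::euclidean_space"
  assumes b: "b \<in> Basis" and \<sigma>: "\<sigma> = 1 \<or> \<sigma> = -1" and s: "s > 0"
    and k: "k \<in> extensional (Basis - {b})" and k': "k' \<in> extensional (Basis - {b})"
    and z: "z \<in> cube b \<sigma> x k s (D + real i * s)" and z': "z \<in> cube b \<sigma> x' k' s (D + real i' * s)"
  shows "k = k' \<and> (x = x' \<longrightarrow> i = i')"
proof
  have A: "\<forall>j\<in>Basis - {b}. s * real_of_int (k j) < z \<bullet> j \<and> z \<bullet> j < s * real_of_int (k j) + s"
    "D + real i * s < \<sigma> * (x \<bullet> b - z \<bullet> b)" "\<sigma> * (x \<bullet> b - z \<bullet> b) < D + real i * s + s"
    using z mem_cube[OF b \<sigma>] by auto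
  have B: "\<forall>j\<in>Basis - {b}. s * real_of_int (k' j) < z \<bullet> j \<and> z \<bullet> j < s * real_of_int (k' j) + s"
    "D + real i' * s < \<sigma> * (x' \<bullet> b - z \<bullet> b)" "\<sigma> * (x' \<bullet> b - z \<bullet> b) < D + real i' * s + s"
    using z' mem_cube[OF b \<sigma>] by auto
  show "k = k'"
  proof (rule extensionalityI[OF k k'])
    fix j assume "j \<in> Basis - {b}"
    then show "k j = k' j" using A(1) B(1) int_between_unique[OF s] by blast
  qed
  show "x = x' \<longrightarrow> i = i'"
  proof
    assume "x = x'"
    then have "s * real i < \<sigma> * (x \<bullet> b - z \<bullet> b) - D" "\<sigma> * (x \<bullet> b - z \<bullet> b) - D < s * real i + s"
      "s * real i' < \<sigma> * (x \<bullet> b - z \<bullet> b) - D" "\<sigma> * (x \<bullet> b - z \<bullet> b) - D < s * real i' + s"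
      using A(2,3) B(2,3) by (auto simp: algebra_simps)
    then have "int i = int i'" using int_between_unique[OF s, of "int i" _ "int i'"] by simp
    then show "i = i'" by simp
  qed
qed

context patch begin

lemma e_inner: "j \<in> Basis \<Longrightarrow> (\<sigma> *\<^sub>R b) \<bullet> j = (if j = b then \<sigma> else 0)"
  using b by (auto simp: inner_Basis)

lemma shift_in_Bx:
  assumes x: "x \<in> Bx x0 (r/2)" and t: "\<bar>t\<bar> < r/2"
  shows "x - t *\<^sub>R (\<sigma> *\<^sub>R b) \<in> Bx x0 r"
  unfolding mem_Bx
proof
  fix j :: 'a assume j: "j \<in> Basis"
  have xj: "\<bar>(x - x0) \<bullet> j\<bar> < r/2" using x j unfolding mem_Bx by blast
  have "(x - t *\<^sub>R (\<sigma> *\<^sub>R b) - x0) \<bullet> j = (x - x0) \<bullet> j - t * (if j = b then \<sigma> else 0)"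
    using e_inner[OF j] by (simp add: inner_diff_left)
  moreover have "\<bar>t * (if j = b then \<sigma> else 0)\<bar> \<le> \<bar>t\<bar>" using \<sigma> by (auto simp: abs_mult)
  ultimately show "\<bar>(x - t *\<^sub>R (\<sigma> *\<^sub>R b) - x0) \<bullet> j\<bar> < r" using xj t by linarith
qed

lemma seg_in:
  assumes x: "x \<in> frontier \<Omega>" "x \<in> Bx x0 (r/2)" and t: "0 < t" "t < r/2"
  shows "x - t *\<^sub>R (\<sigma> *\<^sub>R b) \<in> \<Omega>"
proof -
  let ?y = "x - t *\<^sub>R (\<sigma> *\<^sub>R b)"
  have yB: "?y \<in> Bx x0 r" using shift_in_Bx[OF x(2)] t by simp
  have xB: "x \<in> Bx x0 r" using x(2) Bx_mono[of "r/2" r x0] r by auto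
  have "\<rho> ?y + m * t \<le> \<rho> (?y + t *\<^sub>R (\<sigma> *\<^sub>R b))" using rho_mono[OF yB, of t] xB t by simp
  then have "\<rho> ?y < 0" using bdry x(1) m t by (simp add: add_pos_pos) (smt (verit) mult_pos_pos)
  then show ?thesis using inU BU yB by blast
qed

lemma seg_cl:
  assumes x: "x \<in> frontier \<Omega>" "x \<in> Bx x0 (r/2)" and t: "0 \<le> t" "t < r/2"
  shows "x - t *\<^sub>R (\<sigma> *\<^sub>R b) \<in> closure \<Omega>"
proof (cases "t = 0")
  case True then show ?thesis using x(1) frontier_sub_closure by auto
next
  case False then show ?thesis using seg_in[OF x] t closure_subset by force
qed

lemma seg_mvt:
  assumes psi: "continuous_on (closure \<Omega>) \<psi>"
    and dpsi: "\<And>y. y \<in> \<Omega> \<Longrightarrow> (\<psi> has_derivative (\<lambda>v. G y \<bullet> v)) (at y)"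
    and x: "x \<in> frontier \<Omega>" "x \<in> Bx x0 (r/2)" and t: "0 \<le> t1" "t1 < t2" "t2 < r/2"
  shows "\<exists>\<xi>. t1 \<le> \<xi> \<and> \<xi> \<le> t2 \<and> \<bar>\<psi> (x - t1 *\<^sub>R (\<sigma> *\<^sub>R b)) - \<psi> (x - t2 *\<^sub>R (\<sigma> *\<^sub>R b))\<bar>
            \<le> (t2 - t1) * norm (G (x - \<xi> *\<^sub>R (\<sigma> *\<^sub>R b)))"
proof -
  let ?e = "\<sigma> *\<^sub>R b"
  define \<phi> where "\<phi> t = \<psi> (x - t *\<^sub>R ?e)" for t
  have c1: "continuous_on {t1..t2} (\<lambda>t. x - t *\<^sub>R ?e)" by (intro continuous_intros)
  have im: "(\<lambda>t. x - t *\<^sub>R ?e) ` {t1..t2} \<subseteq> closure \<Omega>" using seg_cl[OF x] t by auto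
  have cont: "continuous_on {t1..t2} \<phi>"
    unfolding \<phi>_def by (rule continuous_on_compose2[OF psi c1 im])
  have D: "DERIV \<phi> t :> - (G (x - t *\<^sub>R ?e) \<bullet> ?e)" if "0 < t" "t < r/2" for t
  proof -
    have yO: "x - t *\<^sub>R ?e \<in> \<Omega>" using seg_in[OF x that] .
    have d1: "((\<lambda>t. x - t *\<^sub>R ?e) has_derivative (\<lambda>h. - (h *\<^sub>R ?e))) (at t)"
      by (auto intro!: derivative_eq_intros)
    have "(\<phi> has_derivative (\<lambda>h. G (x - t *\<^sub>R ?e) \<bullet> (- (h *\<^sub>R ?e)))) (at t)"
      unfolding \<phi>_def using has_derivative_compose[OF d1 dpsi[OF yO]] by simp
    moreover have "(\<lambda>h. G (x - t *\<^sub>R ?e) \<bullet> (- (h *\<^sub>R ?e))) = (*) (- (G (x - t *\<^sub>R ?e) \<bullet> ?e))"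
      by (rule ext) (simp add: mult.commute)
    ultimately show ?thesis unfolding has_field_derivative_def by simp
  qed
  obtain l z where z: "t1 < z" "z < t2" and Dz: "DERIV \<phi> z :> l" and eq: "\<phi> t2 - \<phi> t1 = (t2 - t1) * l"
    using MVT[OF t(2) cont] D t real_differentiable_def by (metis less_trans order_le_less_trans)
  have "l = - (G (x - z *\<^sub>R ?e) \<bullet> ?e)" using DERIV_unique[OF Dz D] z t by simp
  then have "\<bar>l\<bar> \<le> norm (G (x - z *\<^sub>R ?e))" using Cauchy_Schwarz_ineq2[of "G (x - z *\<^sub>R ?e)" ?e] norm_e by simp
  moreover have "\<bar>\<phi> t1 - \<phi> t2\<bar> = (t2 - t1) * \<bar>l\<bar>"
    using eq t by (metis abs_minus_commute abs_mult abs_of_pos diff_gt_0_iff_gt)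
  ultimately have "\<bar>\<phi> t1 - \<phi> t2\<bar> \<le> (t2 - t1) * norm (G (x - z *\<^sub>R ?e))"
    using t by (simp add: mult_left_mono)
  then show ?thesis using z unfolding \<phi>_def by (intro exI[of _ z]) auto
qed

lemma cube_in:
  assumes s: "s > 0" and x: "x \<in> frontier \<Omega>" "x \<in> Bx x0 (r/2)"
    and D: "D = M / m * real DIM('a) * s" and t: "t \<ge> 0" and small: "D + t + s < r/2"
    and z: "z \<in> cube b \<sigma> x (grid_idx b s x) s (D + t)"
  shows "z \<in> \<Omega>" "\<And>t'. t \<le> t' \<Longrightarrow> t' \<le> t + s \<Longrightarrow>
           norm (z - (x - t' *\<^sub>R (\<sigma> *\<^sub>R b))) \<le> D + s + real DIM('a) * s"
proof -
  let ?e = "\<sigma> *\<^sub>R b"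
  let ?k = "grid_idx b s x"
  define \<tau> where "\<tau> = \<sigma> * (x \<bullet> b - z \<bullet> b)"
  have zc: "\<forall>j\<in>Basis - {b}. s * real_of_int (?k j) < z \<bullet> j \<and> z \<bullet> j < s * real_of_int (?k j) + s"
    "D + t < \<tau>" "\<tau> < D + t + s"
    using z mem_cube[OF b \<sigma>] unfolding \<tau>_def by auto
  have D0: "D \<ge> 0" using D m M s by simp
  have xc: "s * real_of_int (?k j) \<le> x \<bullet> j \<and> x \<bullet> j < s * real_of_int (?k j) + s" if j: "j \<in> Basis - {b}" for j
  proof -
    have "?k j = \<lfloor>(x \<bullet> j) / s\<rfloor>" using j unfolding grid_idx_def by simp
    then have "real_of_int (?k j) \<le> (x \<bullet> j) / s" "(x \<bullet> j) / s < real_of_int (?k j) + 1" by linarith+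
    then show ?thesis using s by (simp add: field_simps)
  qed
  have lat_j: "\<bar>(z - x) \<bullet> j\<bar> < s" if j: "j \<in> Basis - {b}" for j
  proof -
    have "s * real_of_int (?k j) < z \<bullet> j" "z \<bullet> j < s * real_of_int (?k j) + s" using zc(1) j by auto
    then show ?thesis using xc[OF j] by (simp add: inner_diff_left abs_less_iff)
  qed
  define w where "w = lat b (z - x)"
  have nw: "norm w \<le> real DIM('a) * s"
  proof -
    have "norm w \<le> (\<Sum>j\<in>Basis - {b}. \<bar>(z - x) \<bullet> j\<bar>)" unfolding w_def by (rule norm_lat_le[OF b])
    also have "\<dots> \<le> (\<Sum>j\<in>Basis - {b}. s)" using lat_j by (intro sum_mono) (simp add: less_imp_le)
    also have "\<dots> \<le> real DIM('a) * s" using s card_Basis_minus[OF b] by simp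
    finally show ?thesis .
  qed
  have zrep: "z = (x - \<tau> *\<^sub>R ?e) + w"
  proof -
    have "\<tau> *\<^sub>R ?e = (\<sigma> * \<sigma> * (x \<bullet> b - z \<bullet> b)) *\<^sub>R b" by (simp add: \<tau>_def)
    also have "\<dots> = (x \<bullet> b - z \<bullet> b) *\<^sub>R b" using sig_sq by simp
    finally show ?thesis unfolding w_def lat_def by (simp add: inner_diff_left algebra_simps)
  qed
  have tau_pos: "\<tau> > 0" using zc(2) D0 t by linarith
  have tau_r: "\<bar>\<tau>\<bar> < r/2" using zc(3) tau_pos small by simp
  have yB: "x - \<tau> *\<^sub>R ?e \<in> Bx x0 r" by (rule shift_in_Bx[OF x(2) tau_r])
  have xB: "x \<in> Bx x0 r" using x(2) Bx_mono[of "r/2" r x0] r by auto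
  have zB: "z \<in> Bx x0 r"
    unfolding mem_Bx
  proof
    fix j :: 'a assume j: "j \<in> Basis"
    show "\<bar>(z - x0) \<bullet> j\<bar> < r"
    proof (cases "j = b")
      case True
      have st: "\<sigma> * \<tau> = x \<bullet> b - z \<bullet> b" unfolding \<tau>_def
        by (metis mult.assoc mult_1 sig_sq)
      have "(z - x0) \<bullet> j = (x - \<tau> *\<^sub>R ?e - x0) \<bullet> j"
        using True b st by (simp add: inner_diff_left algebra_simps)
      then show ?thesis using yB j unfolding mem_Bx by simp
    next
      case False
      have "(z - x0) \<bullet> j = (z - x) \<bullet> j + (x - x0) \<bullet> j" by (simp add: inner_diff_left)
      moreover have "\<bar>(x - x0) \<bullet> j\<bar> < r/2" using x(2) j unfolding mem_Bx by blast
      moreover have "\<bar>(z - x) \<bullet> j\<bar> < s" using lat_j j False by blast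
      moreover have "s < r/2" using small D0 t by linarith
      ultimately show ?thesis by linarith
    qed
  qed
  have "\<rho> (x - \<tau> *\<^sub>R ?e) + m * \<tau> \<le> \<rho> (x - \<tau> *\<^sub>R ?e + \<tau> *\<^sub>R ?e)"
    using rho_mono[OF yB, of \<tau>] xB tau_pos by simp
  then have r1: "\<rho> (x - \<tau> *\<^sub>R ?e) \<le> - (m * \<tau>)" using bdry x(1) by simp
  have "\<bar>\<rho> z - \<rho> (x - \<tau> *\<^sub>R ?e)\<bar> \<le> M * norm (z - (x - \<tau> *\<^sub>R ?e))" by (rule rho_lip[OF zB yB])
  also have "\<dots> = M * norm w" using zrep by simp
  also have "\<dots> \<le> M * (real DIM('a) * s)" using nw M by (intro mult_left_mono) auto
  also have "\<dots> = m * D" using D m by simp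
  finally have "\<rho> z \<le> - (m * \<tau>) + m * D" using r1 by linarith
  moreover have "m * D < m * \<tau>" using zc(2) t m by (intro mult_strict_left_mono) auto
  ultimately have "\<rho> z < 0" by linarith
  then show "z \<in> \<Omega>" using inU BU zB by blast
  fix t' assume t': "t \<le> t'" "t' \<le> t + s"
  have "z - (x - t' *\<^sub>R ?e) = w + (t' - \<tau>) *\<^sub>R ?e" using zrep by (simp add: algebra_simps)
  moreover have "norm ((t' - \<tau>) *\<^sub>R ?e) = \<bar>t' - \<tau>\<bar>" using norm_e by (simp only: norm_scaleR) simp
  ultimately have "norm (z - (x - t' *\<^sub>R ?e)) \<le> norm w + \<bar>t' - \<tau>\<bar>"
    using norm_triangle_ineq[of w "(t' - \<tau>) *\<^sub>R ?e"] by simp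
  moreover have "\<bar>t' - \<tau>\<bar> \<le> D + s" using t' zc(2,3) D0 by (simp add: abs_le_iff)
  ultimately show "norm (z - (x - t' *\<^sub>R ?e)) \<le> D + s + real DIM('a) * s" using nw by linarith
qed

end


lemma nn_set_eq:
  fixes \<Omega> :: "'a::euclidean_space set"
  assumes "set_integrable lborel \<Omega> f" "\<And>x. x \<in> \<Omega> \<Longrightarrow> 0 \<le> f x"
  shows "(\<integral>\<^sup>+x. ennreal (f x) * indicator \<Omega> x \<partial>lborel) = ennreal (LINT x:\<Omega>|lborel. f x)"
proof -
  have "(\<integral>\<^sup>+x. ennreal (indicat_real \<Omega> x *\<^sub>R f x) \<partial>lborel) = ennreal (integral\<^sup>L lborel (\<lambda>x. indicat_real \<Omega> x *\<^sub>R f x))"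
    using assms(1) unfolding set_integrable_def
    by (rule nn_integral_eq_integral) (use assms(2) in \<open>auto simp: indicator_def\<close>)
  moreover have "(\<lambda>x. ennreal (indicat_real \<Omega> x *\<^sub>R f x)) = (\<lambda>x. ennreal (f x) * indicator \<Omega> x)"
    by (rule ext) (auto simp: indicator_def)
  ultimately show ?thesis unfolding set_lebesgue_integral_def by simp
qed

lemma cellset_sets:
  fixes \<Omega> :: "'a::euclidean_space set"
  assumes "k \<in> extensional (Basis - {b})"
  shows "cellset (frontier \<Omega>) b x0 r s k \<in> sets (surface_measure \<Omega>)"
proof -
  have e: "{x. grid_idx b s x = k} = {x::'a. \<forall>j\<in>Basis - {b}. \<lfloor>(x \<bullet> j) / s\<rfloor> = k j}"
  proof (intro set_eqI iffI)
    fix x assume "x \<in> {x. grid_idx b s x = k}"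
    then show "x \<in> {x::'a. \<forall>j\<in>Basis - {b}. \<lfloor>(x \<bullet> j) / s\<rfloor> = k j}"
      unfolding grid_idx_def by (auto simp: restrict_def split: if_splits)
  next
    fix x assume x: "x \<in> {x::'a. \<forall>j\<in>Basis - {b}. \<lfloor>(x \<bullet> j) / s\<rfloor> = k j}"
    have "grid_idx b s x = k" unfolding grid_idx_def
      by (rule extensionalityI[OF _ assms]) (use x in auto)
    then show "x \<in> {x. grid_idx b s x = k}" by simp
  qed
  have b1: "{x::'a. \<forall>j\<in>Basis - {b}. \<lfloor>(x \<bullet> j) / s\<rfloor> = k j} \<in> sets borel" by measurable
  have b2: "Bx x0 (r/2) \<in> sets borel" by (simp add: open_Bx)
  have "cellset (frontier \<Omega>) b x0 r s k = frontier \<Omega> \<inter> (Bx x0 (r/2) \<inter> {x. grid_idx b s x = k})"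
    unfolding cellset_def by auto
  moreover have "frontier \<Omega> \<inter> (Bx x0 (r/2) \<inter> {x. grid_idx b s x = k}) \<in> sets (restrict_space borel (frontier \<Omega>))"
    using b1 b2 e by (subst sets_restrict_space_iff) auto
  ultimately show ?thesis by (metis sets_surface_measure(1))
qed

context patch begin

lemma local_est:
  assumes dim: "DIM('a) \<ge> 2"
    and psi: "continuous_on (closure \<Omega>) \<psi>"
    and Gc: "continuous_on (closure \<Omega>) G"
    and dpsi: "\<And>y. y \<in> \<Omega> \<Longrightarrow> (\<psi> has_derivative (\<lambda>v. G y \<bullet> v)) (at y)"
    and h: "0 < h" "h \<le> r/4" and \<eta>: "\<eta> > 0"
  shows "(\<integral>\<^sup>+x. ennreal ((\<psi> x)\<^sup>2) * indicator (frontier \<Omega> \<inter> Bx x0 (r/2)) x \<partial>surface_measure \<Omega>)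
         \<le> ennreal (unit_ball_vol (real (DIM('a) - 1)) * ((1 + M/m) * real DIM('a) / 2) ^ (DIM('a) - 1)
              * (LINT z:\<Omega>|lborel. (h/2) * (norm (G z))\<^sup>2 + (3/h) * (\<psi> z)\<^sup>2 + \<eta> * (h/2 + 4/h)))"
proof -
  define n where "n = DIM('a)"
  define d where "d = n - 1"
  define cc where "cc = (1 + M/m) * real n"
  define \<kappa>0 where "\<kappa>0 = unit_ball_vol (real d) * (cc / 2) ^ d"
  define F where "F = frontier \<Omega>"
  define I where "I = Bx x0 (r/2)"
  define \<Phi> where "\<Phi> z = (h/2) * (norm (G z))\<^sup>2 + (3/h) * (\<psi> z)\<^sup>2 + \<eta> * (h/2 + 4/h)" for z
  let ?e = "\<sigma> *\<^sub>R b"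
  have n1: "n \<ge> 2" using dim by (simp add: n_def)
  have nd: "n = Suc d" using n1 by (simp add: d_def)
  have \<kappa>0: "\<kappa>0 \<ge> 0" using m M by (simp add: \<kappa>0_def cc_def)
  have cl: "compact (closure \<Omega>)" using bd by (simp add: compact_closure)
  have uc1: "uniformly_continuous_on (closure \<Omega>) (\<lambda>x. (\<psi> x)\<^sup>2)"
    by (rule compact_uniformly_continuous[OF _ cl]) (intro continuous_intros psi)
  have uc2: "uniformly_continuous_on (closure \<Omega>) (\<lambda>x. (norm (G x))\<^sup>2)"
    by (rule compact_uniformly_continuous[OF _ cl]) (intro continuous_intros Gc)
  obtain \<delta>1 where \<delta>1: "\<delta>1 > 0" "\<forall>x\<in>closure \<Omega>. \<forall>y\<in>closure \<Omega>. dist y x < \<delta>1 \<longrightarrow> dist ((\<psi> y)\<^sup>2) ((\<psi> x)\<^sup>2) < \<eta>"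
    using uc1 \<eta> unfolding uniformly_continuous_on_def by metis
  obtain \<delta>2 where \<delta>2: "\<delta>2 > 0" "\<forall>x\<in>closure \<Omega>. \<forall>y\<in>closure \<Omega>. dist y x < \<delta>2 \<longrightarrow> dist ((norm (G y))\<^sup>2) ((norm (G x))\<^sup>2) < \<eta>"
    using uc2 \<eta> unfolding uniformly_continuous_on_def by metis
  define \<delta>0 where "\<delta>0 = min \<delta>1 \<delta>2"
  have \<delta>0: "\<delta>0 > 0" using \<delta>1 \<delta>2 by (simp add: \<delta>0_def)
  have close1: "(\<psi> y)\<^sup>2 \<le> (\<psi> x)\<^sup>2 + \<eta>" if "x \<in> closure \<Omega>" "y \<in> closure \<Omega>" "dist y x < \<delta>0" for x y
    using \<delta>1(2) that by (force simp: \<delta>0_def dist_real_def abs_less_iff)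
  have close2: "(norm (G y))\<^sup>2 \<le> (norm (G x))\<^sup>2 + \<eta>" if "x \<in> closure \<Omega>" "y \<in> closure \<Omega>" "dist y x < \<delta>0" for x y
    using \<delta>2(2) that by (force simp: \<delta>0_def dist_real_def abs_less_iff)
  define c2 where "c2 = M / m * real n + 1 + real n"
  have c2: "c2 > 0" using m M unfolding c2_def by (intro add_pos_nonneg add_nonneg_pos) auto
  define Q where "Q = c2 / \<delta>0 + (M / m * real n + 2) * 4 / r"
  define J :: nat where "J = nat \<lceil>h * Q\<rceil> + 1"
  have J1: "J \<ge> 1" by (simp add: J_def)
  have JQ: "h * Q < real J" unfolding J_def by linarith
  define s where "s = h / real J"
  have s: "s > 0" using h J1 by (simp add: s_def)
  have hJs: "h = real J * s" using J1 by (simp add: s_def)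
  have sQ: "s * Q < 1" using JQ J1 h by (simp add: s_def field_simps)
  have Q1: "c2 / \<delta>0 \<le> Q" "(M / m * real n + 2) * 4 / r \<le> Q"
    using \<delta>0 c2 r m M by (auto simp: Q_def)
  have c2s: "c2 * s < \<delta>0"
  proof -
    have "s * (c2 / \<delta>0) < 1" using sQ Q1(1) s by (meson le_less_trans mult_left_mono less_imp_le)
    then show ?thesis using \<delta>0 by (simp add: field_simps)
  qed
  define D where "D = M / m * real n * s"
  have D0: "D \<ge> 0" using m M s by (simp add: D_def)
  have Dr: "D + s < r/4"
  proof -
    have "s * ((M / m * real n + 2) * 4 / r) < 1" using sQ Q1(2) s by (meson le_less_trans mult_left_mono less_imp_le)
    then have "s * (M / m * real n + 2) * 4 < r" using r by (simp add: field_simps)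
    then show ?thesis using s by (simp add: D_def algebra_simps)
  qed
  have ccs: "cc * s \<le> c2 * s" using s m M by (simp add: cc_def c2_def algebra_simps)
  define K where "K = grid_idx b s ` (F \<inter> I)"
  have bF: "bounded F" unfolding F_def using bd by (meson bounded_closure bounded_subset frontier_sub_closure)
  obtain Bd where Bd: "\<forall>x\<in>F. norm x \<le> Bd" using bF bounded_iff by blast
  define R where "R = \<lceil>Bd / s\<rceil>"
  have Ksub: "K \<subseteq> (\<Pi>\<^sub>E j\<in>Basis - {b}. {-R..R})"
  proof
    fix k assume "k \<in> K"
    then obtain x where x: "x \<in> F" "k = grid_idx b s x" by (auto simp: K_def)
    show "k \<in> (\<Pi>\<^sub>E j\<in>Basis - {b}. {-R..R})"
    proof (rule PiE_I)
      fix j assume j: "j \<in> Basis - {b}"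
      have "\<bar>x \<bullet> j\<bar> \<le> Bd" using Bd x(1) j Basis_le_norm[of j x] by (meson DiffD1 order.trans)
      then have "\<bar>(x \<bullet> j) / s\<bar> \<le> Bd / s" using s by (simp add: abs_divide divide_right_mono)
      then have "- (Bd / s) \<le> (x \<bullet> j) / s" "(x \<bullet> j) / s \<le> Bd / s" by linarith+
      then have "-R \<le> \<lfloor>(x \<bullet> j) / s\<rfloor>" "\<lfloor>(x \<bullet> j) / s\<rfloor> \<le> R" unfolding R_def
        by (simp_all add: ceiling_le_iff le_floor_iff) linarith+
      then show "k j \<in> {-R..R}" using x(2) j by (simp add: grid_idx_def)
    next
      fix j assume "j \<notin> Basis - {b}"
      then show "k j = undefined" using x(2) unfolding grid_idx_def restrict_def by (simp only: if_False)
    qed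
  qed
  have finK: "finite K" by (rule finite_subset[OF Ksub]) (auto intro!: finite_PiE)
  have Kext: "k \<in> extensional (Basis - {b})" if "k \<in> K" for k
    using that by (auto simp: K_def grid_idx_def)
  define xk where "xk k = (SOME x. x \<in> F \<inter> I \<and> grid_idx b s x = k)" for k
  have xk: "xk k \<in> F" "xk k \<in> I" "grid_idx b s (xk k) = k" if "k \<in> K" for k
  proof -
    have "\<exists>x. x \<in> F \<inter> I \<and> grid_idx b s x = k" using that by (auto simp: K_def)
    then have "xk k \<in> F \<inter> I \<and> grid_idx b s (xk k) = k" unfolding xk_def by (rule someI_ex)
    then show "xk k \<in> F" "xk k \<in> I" "grid_idx b s (xk k) = k" by auto
  qed
  define p where "p k i = xk k - (real i * s) *\<^sub>R ?e" for k i
  have pcl: "p k i \<in> closure \<Omega>" if "k \<in> K" "i \<le> J" for k i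
  proof -
    have "real i * s \<le> real J * s" using that s by (intro mult_right_mono) auto
    then have "real i * s < r/2" using hJs h by linarith
    then show ?thesis unfolding p_def using seg_cl[OF xk(1,2)[OF that(1), unfolded F_def I_def]] s by simp
  qed
  define \<xi>t where "\<xi>t k i = (SOME \<xi>. real i * s \<le> \<xi> \<and> \<xi> \<le> real (Suc i) * s \<and>
      \<bar>\<psi> (p k i) - \<psi> (p k (Suc i))\<bar> \<le> s * norm (G (xk k - \<xi> *\<^sub>R ?e)))" for k i
  have \<xi>t: "real i * s \<le> \<xi>t k i" "\<xi>t k i \<le> real (Suc i) * s"
     "\<bar>\<psi> (p k i) - \<psi> (p k (Suc i))\<bar> \<le> s * norm (G (xk k - \<xi>t k i *\<^sub>R ?e))"
    if ki: "k \<in> K" "i < J" for k i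
  proof -
    have "real (Suc i) * s \<le> real J * s" using ki s by (intro mult_right_mono) auto
    then have t2: "real (Suc i) * s < r/2" using hJs h by linarith
    obtain \<xi> where "real i * s \<le> \<xi> \<and> \<xi> \<le> real (Suc i) * s \<and>
        \<bar>\<psi> (xk k - (real i * s) *\<^sub>R ?e) - \<psi> (xk k - (real (Suc i) * s) *\<^sub>R ?e)\<bar>
          \<le> (real (Suc i) * s - real i * s) * norm (G (xk k - \<xi> *\<^sub>R ?e))"
      using seg_mvt[OF psi dpsi xk(1,2)[OF ki(1), unfolded F_def I_def], of "real i * s" "real (Suc i) * s"] s t2
      by (auto simp: algebra_simps)
    then have "\<exists>\<xi>. real i * s \<le> \<xi> \<and> \<xi> \<le> real (Suc i) * s \<and>
      \<bar>\<psi> (p k i) - \<psi> (p k (Suc i))\<bar> \<le> s * norm (G (xk k - \<xi> *\<^sub>R ?e))"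
      unfolding p_def by (intro exI[of _ \<xi>]) (simp add: algebra_simps)
    then have "real i * s \<le> \<xi>t k i \<and> \<xi>t k i \<le> real (Suc i) * s \<and>
      \<bar>\<psi> (p k i) - \<psi> (p k (Suc i))\<bar> \<le> s * norm (G (xk k - \<xi>t k i *\<^sub>R ?e))"
      unfolding \<xi>t_def by (rule someI_ex)
    then show "real i * s \<le> \<xi>t k i" "\<xi>t k i \<le> real (Suc i) * s"
     "\<bar>\<psi> (p k i) - \<psi> (p k (Suc i))\<bar> \<le> s * norm (G (xk k - \<xi>t k i *\<^sub>R ?e))" by auto
  qed
  define gg where "gg k i = norm (G (xk k - \<xi>t k i *\<^sub>R ?e))" for k i
  define a where "a k i = (h/2) * (gg k i)\<^sup>2 + (1/h) * (\<psi> (p k i))\<^sup>2 + (2/h) * (\<psi> (p k (Suc i)))\<^sup>2 + \<eta> / h" for k i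
  have a0: "a k i \<ge> 0" for k i using h \<eta> by (simp add: a_def)
  have S4: "(\<psi> (xk k))\<^sup>2 + \<eta> \<le> (\<Sum>i<J. s * a k i)" if k: "k \<in> K" for k
  proof -
    have "(\<psi> (p k 0))\<^sup>2 \<le> (\<Sum>i<J. s * ((h/2) * (gg k i)\<^sup>2 + (1/h) * (\<psi> (p k i))\<^sup>2 + (2/h) * (\<psi> (p k (Suc i)))\<^sup>2))"
      by (rule disc_trace[OF J1 s hJs]) (use \<xi>t(3)[OF k] in \<open>auto simp: gg_def\<close>)
    moreover have "(\<Sum>i<J. s * a k i) = (\<Sum>i<J. s * ((h/2) * (gg k i)\<^sup>2 + (1/h) * (\<psi> (p k i))\<^sup>2 + (2/h) * (\<psi> (p k (Suc i)))\<^sup>2)) + real J * s * \<eta> / h"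
      by (simp add: a_def sum.distrib distrib_left)
    moreover have "real J * s * \<eta> / h = \<eta>" using h by (simp add: hJs[symmetric])
    moreover have "p k 0 = xk k" by (simp add: p_def)
    ultimately show ?thesis by simp
  qed
  define C where "C k i = cube b \<sigma> (xk k) k s (D + real i * s)" for k i
  have S5: "z \<in> \<Omega> \<and> a k i \<le> \<Phi> z" if ki: "k \<in> K" "i < J" and z: "z \<in> C k i" for k i z
  proof -
    have small: "D + real i * s + s < r/2"
    proof -
      have "real (Suc i) * s \<le> real J * s" using ki s by (intro mult_right_mono) auto
      then have "real i * s + s \<le> real J * s" by (simp add: algebra_simps)
      then show ?thesis using hJs h Dr s by linarith
    qed
    have zc: "z \<in> cube b \<sigma> (xk k) (grid_idx b s (xk k)) s (D + real i * s)"
      using z xk(3)[OF ki(1)] by (simp add: C_def)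
    note ci = cube_in[OF s xk(1,2)[OF ki(1), unfolded F_def I_def] D_def[unfolded n_def] _ small zc]
    have zO: "z \<in> \<Omega>" using ci(1) s by simp
    have zcl: "z \<in> closure \<Omega>" using zO closure_subset by blast
    have dist_ok: "dist y z < \<delta>0" if "norm (z - y) \<le> D + s + real n * s" for y
    proof -
      have "D + s + real n * s = c2 * s" by (simp add: D_def c2_def algebra_simps)
      then show ?thesis using that c2s by (simp add: dist_norm norm_minus_commute)
    qed
    have d1: "norm (z - p k i) \<le> D + s + real n * s"
      using ci(2)[of "real i * s"] s unfolding p_def n_def by simp
    have d2: "norm (z - p k (Suc i)) \<le> D + s + real n * s"
      using ci(2)[of "real (Suc i) * s"] s unfolding p_def n_def by (simp add: algebra_simps)
    have d3: "norm (z - (xk k - \<xi>t k i *\<^sub>R ?e)) \<le> D + s + real n * s"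
      using ci(2)[of "\<xi>t k i"] \<xi>t(1,2)[OF ki] unfolding n_def by (simp add: algebra_simps)
    have \<xi>cl: "xk k - \<xi>t k i *\<^sub>R ?e \<in> closure \<Omega>"
    proof -
      have "real (Suc i) * s \<le> real J * s" using ki s by (intro mult_right_mono) auto
      then have "\<xi>t k i < r/2" using \<xi>t(2)[OF ki] hJs h by linarith
      moreover have "0 \<le> \<xi>t k i" using \<xi>t(1)[OF ki] s by (meson mult_nonneg_nonneg of_nat_0_le_iff order.trans less_imp_le)
      ultimately show ?thesis using seg_cl[OF xk(1,2)[OF ki(1), unfolded F_def I_def]] by blast
    qed
    have e1: "(\<psi> (p k i))\<^sup>2 \<le> (\<psi> z)\<^sup>2 + \<eta>" using close1[OF zcl pcl[OF ki(1)] dist_ok[OF d1]] ki by simp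
    have e2: "(\<psi> (p k (Suc i)))\<^sup>2 \<le> (\<psi> z)\<^sup>2 + \<eta>" using close1[OF zcl pcl[OF ki(1)] dist_ok[OF d2]] ki by simp
    have e3: "(gg k i)\<^sup>2 \<le> (norm (G z))\<^sup>2 + \<eta>" using close2[OF zcl \<xi>cl dist_ok[OF d3]] by (simp add: gg_def)
    have "a k i \<le> (h/2) * ((norm (G z))\<^sup>2 + \<eta>) + (1/h) * ((\<psi> z)\<^sup>2 + \<eta>) + (2/h) * ((\<psi> z)\<^sup>2 + \<eta>) + \<eta> / h"
      unfolding a_def using e1 e2 e3 h by (intro add_mono mult_left_mono) auto
    also have "\<dots> = \<Phi> z" using h by (simp add: \<Phi>_def field_simps)
    finally show ?thesis using zO by simp
  qed
  have Cdisj: "(k, i) = (k', i')" if "k \<in> K" "k' \<in> K" "z \<in> C k i" "z \<in> C k' i'" for k k' i i' z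
    using cube_disjoint[OF b \<sigma> s Kext[OF that(1)] Kext[OF that(2)]] that(3,4) unfolding C_def by blast
  define KJ where "KJ = K \<times> {..<J}"
  have finKJ: "finite KJ" using finK by (simp add: KJ_def)
  have Csets: "C k i \<in> sets lborel" for k i by (simp add: C_def cube_def)
  have Cmeas: "emeasure lborel (C k i) = ennreal (s ^ n)" for k i
    unfolding C_def n_def by (rule cube_measure[OF s])
  have A: "ennreal ((\<psi> x)\<^sup>2) * indicator (F \<inter> I) x
      \<le> (\<Sum>k\<in>K. ennreal ((\<psi> (xk k))\<^sup>2 + \<eta>) * indicator (cellset F b x0 r s k) x)" for x
  proof (cases "x \<in> F \<inter> I")
    case True
    define k0 where "k0 = grid_idx b s x"
    have k0: "k0 \<in> K" using True by (simp add: K_def k0_def)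
    have xc: "x \<in> cellset F b x0 r s k0" using True by (simp add: cellset_def I_def k0_def)
    have xkc: "xk k0 \<in> cellset F b x0 r s k0" using xk[OF k0] by (simp add: cellset_def I_def)
    have "norm (x - xk k0) \<le> cc * s"
      using cell_diam[OF s, of x k0 "xk k0"] xc xkc by (simp add: F_def cc_def n_def)
    then have "dist x (xk k0) < \<delta>0" using ccs c2s by (simp add: dist_norm)
    moreover have "xk k0 \<in> closure \<Omega>" "x \<in> closure \<Omega>"
      using xk(1)[OF k0] True frontier_sub_closure unfolding F_def by auto
    ultimately have "(\<psi> x)\<^sup>2 \<le> (\<psi> (xk k0))\<^sup>2 + \<eta>" using close1 by blast
    then have "ennreal ((\<psi> x)\<^sup>2) * indicator (F \<inter> I) x \<le> ennreal ((\<psi> (xk k0))\<^sup>2 + \<eta>) * indicator (cellset F b x0 r s k0) x"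
      using True xc by (simp add: ennreal_leI)
    also have "\<dots> \<le> (\<Sum>k\<in>K. ennreal ((\<psi> (xk k))\<^sup>2 + \<eta>) * indicator (cellset F b x0 r s k) x)"
      by (rule member_le_sum[OF k0 _ finK]) auto
    finally show ?thesis .
  next
    case False then show ?thesis by simp
  qed
  have cellM: "cellset F b x0 r s k \<in> sets (surface_measure \<Omega>)" if "k \<in> K" for k
    unfolding F_def by (rule cellset_sets[OF Kext[OF that]])
  have cellH: "emeasure (surface_measure \<Omega>) (cellset F b x0 r s k) \<le> ennreal (\<kappa>0 * s ^ d)" for k
  proof -
    have "emeasure (surface_measure \<Omega>) (cellset F b x0 r s k) \<le> hausdorff_measure (DIM('a) - 1) (cellset F b x0 r s k)"
      by (rule emeasure_surface_le)
    also have "\<dots> \<le> ennreal (unit_ball_vol (real (DIM('a) - 1)) * ((1 + M/m) * real DIM('a) * s / 2) ^ (DIM('a) - 1))"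
      unfolding F_def by (rule cell_hausdorff[OF dim s])
    also have "unit_ball_vol (real (DIM('a) - 1)) * ((1 + M/m) * real DIM('a) * s / 2) ^ (DIM('a) - 1) = \<kappa>0 * s ^ d"
      by (simp add: \<kappa>0_def cc_def n_def d_def power_mult_distrib power_divide)
    finally show ?thesis .
  qed
  have B1: "(\<integral>\<^sup>+x. ennreal ((\<psi> x)\<^sup>2) * indicator (F \<inter> I) x \<partial>surface_measure \<Omega>)
      \<le> (\<Sum>k\<in>K. ennreal ((\<psi> (xk k))\<^sup>2 + \<eta>) * emeasure (surface_measure \<Omega>) (cellset F b x0 r s k))"
  proof -
    have "(\<integral>\<^sup>+x. ennreal ((\<psi> x)\<^sup>2) * indicator (F \<inter> I) x \<partial>surface_measure \<Omega>)
        \<le> (\<integral>\<^sup>+x. (\<Sum>k\<in>K. ennreal ((\<psi> (xk k))\<^sup>2 + \<eta>) * indicator (cellset F b x0 r s k) x) \<partial>surface_measure \<Omega>)"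
      by (rule nn_integral_mono) (rule A)
    also have "\<dots> = (\<Sum>k\<in>K. (\<integral>\<^sup>+x. ennreal ((\<psi> (xk k))\<^sup>2 + \<eta>) * indicator (cellset F b x0 r s k) x \<partial>surface_measure \<Omega>))"
      by (rule nn_integral_sum) (use cellM in measurable)
    also have "\<dots> = (\<Sum>k\<in>K. ennreal ((\<psi> (xk k))\<^sup>2 + \<eta>) * emeasure (surface_measure \<Omega>) (cellset F b x0 r s k))"
      by (intro sum.cong refl nn_integral_cmult_indicator cellM)
    finally show ?thesis .
  qed
  have B2: "(\<Sum>k\<in>K. ennreal ((\<psi> (xk k))\<^sup>2 + \<eta>) * emeasure (surface_measure \<Omega>) (cellset F b x0 r s k))
      \<le> ennreal (\<kappa>0 * (\<Sum>ki\<in>KJ. a (fst ki) (snd ki) * s ^ n))"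
  proof -
    have "(\<Sum>k\<in>K. ennreal ((\<psi> (xk k))\<^sup>2 + \<eta>) * emeasure (surface_measure \<Omega>) (cellset F b x0 r s k))
        \<le> (\<Sum>k\<in>K. ennreal ((\<psi> (xk k))\<^sup>2 + \<eta>) * ennreal (\<kappa>0 * s ^ d))"
      by (intro sum_mono mult_left_mono cellH) auto
    also have "\<dots> = ennreal (\<Sum>k\<in>K. ((\<psi> (xk k))\<^sup>2 + \<eta>) * (\<kappa>0 * s ^ d))"
      using \<eta> \<kappa>0 s by (subst sum_ennreal[symmetric]) (auto simp: ennreal_mult)
    also have "\<dots> \<le> ennreal (\<Sum>k\<in>K. \<kappa>0 * (\<Sum>i<J. a k i * s ^ n))"
    proof (intro ennreal_leI sum_mono)
      fix k assume k: "k \<in> K"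
      have "((\<psi> (xk k))\<^sup>2 + \<eta>) * (\<kappa>0 * s ^ d) \<le> (\<Sum>i<J. s * a k i) * (\<kappa>0 * s ^ d)"
        using S4[OF k] \<kappa>0 s by (intro mult_right_mono) auto
      also have "\<dots> = \<kappa>0 * (\<Sum>i<J. a k i * s ^ n)"
        by (simp add: sum_distrib_left sum_distrib_right nd algebra_simps)
      finally show "((\<psi> (xk k))\<^sup>2 + \<eta>) * (\<kappa>0 * s ^ d) \<le> \<kappa>0 * (\<Sum>i<J. a k i * s ^ n)" .
    qed
    also have "(\<Sum>k\<in>K. \<kappa>0 * (\<Sum>i<J. a k i * s ^ n)) = \<kappa>0 * (\<Sum>ki\<in>KJ. a (fst ki) (snd ki) * s ^ n)"
      by (simp add: KJ_def sum_distrib_left[symmetric] sum.cartesian_product case_prod_beta)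
    finally show ?thesis .
  qed
  have P: "(\<Sum>ki\<in>KJ. ennreal (a (fst ki) (snd ki)) * indicator (C (fst ki) (snd ki)) z) \<le> ennreal (\<Phi> z) * indicator \<Omega> z" for z
  proof (cases "\<exists>ki\<in>KJ. z \<in> C (fst ki) (snd ki)")
    case True
    then obtain ki where ki: "ki \<in> KJ" "z \<in> C (fst ki) (snd ki)" by blast
    have kiK: "fst ki \<in> K" "snd ki < J" using ki(1) by (auto simp: KJ_def)
    have "(\<Sum>ki\<in>KJ. ennreal (a (fst ki) (snd ki)) * indicator (C (fst ki) (snd ki)) z)
        = ennreal (a (fst ki) (snd ki)) * indicator (C (fst ki) (snd ki)) z
          + (\<Sum>ki'\<in>KJ - {ki}. ennreal (a (fst ki') (snd ki')) * indicator (C (fst ki') (snd ki')) z)"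
      by (rule sum.remove[OF finKJ ki(1)])
    also have "(\<Sum>ki'\<in>KJ - {ki}. ennreal (a (fst ki') (snd ki')) * indicator (C (fst ki') (snd ki')) z) = 0"
    proof (rule sum.neutral, rule ballI)
      fix ki' assume ki': "ki' \<in> KJ - {ki}"
      have "z \<notin> C (fst ki') (snd ki')"
      proof
        assume "z \<in> C (fst ki') (snd ki')"
        then have "(fst ki, snd ki) = (fst ki', snd ki')"
          using Cdisj[OF kiK(1) _ ki(2)] ki' by (auto simp: KJ_def)
        then show False using ki' by (simp add: prod_eq_iff)
      qed
      then show "ennreal (a (fst ki') (snd ki')) * indicator (C (fst ki') (snd ki')) z = 0" by simp
    qed
    also have "ennreal (a (fst ki) (snd ki)) * indicator (C (fst ki) (snd ki)) z + 0 \<le> ennreal (\<Phi> z) * indicator \<Omega> z"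
      using S5[OF kiK ki(2)] ki(2) by (simp add: ennreal_leI)
    finally show ?thesis .
  next
    case False
    then have "(\<Sum>ki\<in>KJ. ennreal (a (fst ki) (snd ki)) * indicator (C (fst ki) (snd ki)) z) = 0"
      by (intro sum.neutral) auto
    then show ?thesis by simp
  qed
  have \<Phi>int: "set_integrable lborel \<Omega> \<Phi>"
    unfolding \<Phi>_def by (rule set_integrable_closure[OF op bd]) (intro continuous_intros psi Gc)
  have \<Phi>0: "\<Phi> z \<ge> 0" for z using h \<eta> by (simp add: \<Phi>_def)
  have B3: "ennreal (\<kappa>0 * (\<Sum>ki\<in>KJ. a (fst ki) (snd ki) * s ^ n)) \<le> ennreal (\<kappa>0 * (LINT z:\<Omega>|lborel. \<Phi> z))"
  proof -
    have "ennreal (\<kappa>0 * (\<Sum>ki\<in>KJ. a (fst ki) (snd ki) * s ^ n))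
        = ennreal \<kappa>0 * (\<Sum>ki\<in>KJ. ennreal (a (fst ki) (snd ki)) * emeasure lborel (C (fst ki) (snd ki)))"
      using \<kappa>0 a0 s by (simp add: Cmeas ennreal_mult sum_ennreal[symmetric] sum_nonneg)
    also have "(\<Sum>ki\<in>KJ. ennreal (a (fst ki) (snd ki)) * emeasure lborel (C (fst ki) (snd ki)))
        = (\<Sum>ki\<in>KJ. \<integral>\<^sup>+z. ennreal (a (fst ki) (snd ki)) * indicator (C (fst ki) (snd ki)) z \<partial>lborel)"
      by (intro sum.cong refl nn_integral_cmult_indicator[symmetric] Csets)
    also have "\<dots> = (\<integral>\<^sup>+z. (\<Sum>ki\<in>KJ. ennreal (a (fst ki) (snd ki)) * indicator (C (fst ki) (snd ki)) z) \<partial>lborel)"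
      by (rule nn_integral_sum[symmetric]) (use Csets in measurable)
    also have "\<dots> \<le> (\<integral>\<^sup>+z. ennreal (\<Phi> z) * indicator \<Omega> z \<partial>lborel)"
      by (rule nn_integral_mono) (rule P)
    also have "\<dots> = ennreal (LINT z:\<Omega>|lborel. \<Phi> z)" by (rule nn_set_eq[OF \<Phi>int \<Phi>0])
    finally have "ennreal (\<kappa>0 * (\<Sum>ki\<in>KJ. a (fst ki) (snd ki) * s ^ n)) \<le> ennreal \<kappa>0 * ennreal (LINT z:\<Omega>|lborel. \<Phi> z)"
      by (simp add: mult_left_mono)
    also have "\<dots> = ennreal (\<kappa>0 * (LINT z:\<Omega>|lborel. \<Phi> z))"
      using \<kappa>0 by (simp add: ennreal_mult'[symmetric])
    finally show ?thesis .
  qed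
  have "(\<integral>\<^sup>+x. ennreal ((\<psi> x)\<^sup>2) * indicator (F \<inter> I) x \<partial>surface_measure \<Omega>) \<le> ennreal (\<kappa>0 * (LINT z:\<Omega>|lborel. \<Phi> z))"
    using B1 B2 B3 by (meson order.trans)
  then show ?thesis by (simp add: F_def I_def \<kappa>0_def \<Phi>_def cc_def n_def d_def)
qed

end


lemma trace_ineq2:
  fixes \<Omega> :: "'a::euclidean_space set" and \<rho> :: "'a \<Rightarrow> real"
  assumes dim: "DIM('a) \<ge> 2" and dom: "domain \<Omega>" and bd: "bounded \<Omega>" and C2d: "C2_defining_function \<Omega> \<rho>"
  shows "\<exists>C>0. \<exists>h0>0. \<forall>h \<psi>. 0 < h \<longrightarrow> h \<le> h0 \<longrightarrow> C1_closure \<Omega> \<psi> \<longrightarrow>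
     (\<integral>\<^sup>+x. ennreal ((\<psi> x)\<^sup>2) \<partial>surface_measure \<Omega>)
       \<le> ennreal (C * (h * (LINT x:\<Omega>|lborel. (norm (grad \<psi> x))\<^sup>2) + (1/h) * (LINT x:\<Omega>|lborel. (\<psi> x)\<^sup>2)))"
proof -
  obtain U where U: "open U" "frontier \<Omega> \<subseteq> U" "C2_on U \<rho>" "\<forall>x\<in>U. x \<in> \<Omega> \<longleftrightarrow> \<rho> x < 0"
     "\<forall>x\<in>frontier \<Omega>. \<rho> x = 0 \<and> grad \<rho> x \<noteq> 0"
    by (rule C2_def_unfold[OF C2d])
  have op: "open \<Omega>" using dom by (simp add: domain_def)
  define F where "F = frontier \<Omega>"
  have ex: "\<exists>q. patch \<Omega> \<rho> U x0 (fst q) (fst (snd q)) (fst (snd (snd q))) (fst (snd (snd (snd q)))) (snd (snd (snd (snd q))))"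
    if x0: "x0 \<in> F" for x0
  proof -
    obtain b \<sigma> r m M where "b \<in> Basis" "\<sigma> = 1 \<or> \<sigma> = -1" "r > 0" "m > 0" "M > 0" "Bx x0 r \<subseteq> U"
      "\<forall>z\<in>Bx x0 r. grad \<rho> z \<bullet> (\<sigma> *\<^sub>R b) \<ge> m \<and> norm (grad \<rho> z) \<le> M"
      using local_patch[OF U(3,1), of x0] U(2,5) x0 unfolding F_def by blast
    then have "patch \<Omega> \<rho> U x0 b \<sigma> r m M"
      unfolding patch_def using op bd U by blast
    then show ?thesis by (intro exI[of _ "(b, \<sigma>, r, m, M)"]) simp
  qed
  then obtain par where par: "\<forall>x0\<in>F. patch \<Omega> \<rho> U x0 (fst (par x0)) (fst (snd (par x0))) (fst (snd (snd (par x0))))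
      (fst (snd (snd (snd (par x0))))) (snd (snd (snd (snd (par x0)))))"
    by metis
  define bb where "bb x0 = fst (par x0)" for x0
  define ss where "ss x0 = fst (snd (par x0))" for x0
  define rr where "rr x0 = fst (snd (snd (par x0)))" for x0
  define mm where "mm x0 = fst (snd (snd (snd (par x0))))" for x0
  define MM where "MM x0 = snd (snd (snd (snd (par x0))))" for x0
  have pt: "patch \<Omega> \<rho> U x0 (bb x0) (ss x0) (rr x0) (mm x0) (MM x0)" if "x0 \<in> F" for x0
    using par that unfolding bb_def ss_def rr_def mm_def MM_def by blast
  have rpos: "rr x0 > 0" if "x0 \<in> F" for x0 using pt[OF that] unfolding patch_def by blast
  have mpos: "mm x0 > 0" "MM x0 > 0" if "x0 \<in> F" for x0 using pt[OF that] unfolding patch_def by blast+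
  have cF: "compact F" unfolding F_def using bd
    by (meson bounded_closure bounded_subset compact_eq_bounded_closed frontier_closed frontier_sub_closure)
  have cov: "F \<subseteq> (\<Union>x0\<in>F. Bx x0 (rr x0 / 2))"
  proof
    fix x assume "x \<in> F"
    then have "x \<in> Bx x (rr x / 2)" using rpos by (simp add: mem_Bx)
    then show "x \<in> (\<Union>x0\<in>F. Bx x0 (rr x0 / 2))" using \<open>x \<in> F\<close> by blast
  qed
  obtain P where P: "P \<subseteq> F" "finite P" "F \<subseteq> (\<Union>x0\<in>P. Bx x0 (rr x0 / 2))"
    using compactE_image[OF cF _ cov] open_Bx by metis
  define \<kappa> where "\<kappa> x0 = unit_ball_vol (real (DIM('a) - 1)) * ((1 + MM x0 / mm x0) * real DIM('a) / 2) ^ (DIM('a) - 1)" for x0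
  have \<kappa>0: "\<kappa> x0 \<ge> 0" if "x0 \<in> F" for x0 using mpos[OF that] by (simp add: \<kappa>_def)
  define Ct where "Ct = (\<Sum>x0\<in>P. \<kappa> x0)"
  have Ct0: "Ct \<ge> 0" unfolding Ct_def using \<kappa>0 P(1) by (intro sum_nonneg) auto
  define h0 where "h0 = Min (insert 1 ((\<lambda>x0. rr x0 / 4) ` P))"
  have h0: "h0 > 0" unfolding h0_def using P rpos by (subst Min_gr_iff) auto
  have h0r: "h0 \<le> rr x0 / 4" if "x0 \<in> P" for x0 unfolding h0_def using P(2) that by (intro Min_le) auto
  have key: "\<forall>h \<psi>. 0 < h \<longrightarrow> h \<le> h0 \<longrightarrow> C1_closure \<Omega> \<psi> \<longrightarrow>
     (\<integral>\<^sup>+x. ennreal ((\<psi> x)\<^sup>2) \<partial>surface_measure \<Omega>)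
       \<le> ennreal ((3 * Ct + 1) * (h * (LINT x:\<Omega>|lborel. (norm (grad \<psi> x))\<^sup>2) + (1/h) * (LINT x:\<Omega>|lborel. (\<psi> x)\<^sup>2)))"
  proof (intro allI impI)
    fix h \<psi> assume h: "0 < h" "h \<le> h0" and \<psi>: "C1_closure \<Omega> \<psi>"
    obtain G where G: "continuous_on (closure \<Omega>) G" "\<forall>x\<in>\<Omega>. G x = grad \<psi> x"
      using \<psi> unfolding C1_closure_def by blast
    have psic: "continuous_on (closure \<Omega>) \<psi>" using \<psi> unfolding C1_closure_def by blast
    have dpsi: "(\<psi> has_derivative (\<lambda>v. G y \<bullet> v)) (at y)" if "y \<in> \<Omega>" for y
      using grad_has_derivative[of \<psi> y] \<psi> that G(2) unfolding C1_closure_def by auto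
    define E where "E = (LINT x:\<Omega>|lborel. (norm (grad \<psi> x))\<^sup>2)"
    define N where "N = (LINT x:\<Omega>|lborel. (\<psi> x)\<^sup>2)"
    have E0: "E \<ge> 0" unfolding E_def set_lebesgue_integral_def by (rule integral_nonneg_AE) (auto simp: indicator_def)
    have N0: "N \<ge> 0" unfolding N_def set_lebesgue_integral_def by (rule integral_nonneg_AE) (auto simp: indicator_def)
    have iE: "set_integrable lborel \<Omega> (\<lambda>x. (norm (G x))\<^sup>2)"
      by (rule set_integrable_closure[OF op bd]) (intro continuous_intros G)
    have iN: "set_integrable lborel \<Omega> (\<lambda>x. (\<psi> x)\<^sup>2)"
      by (rule set_integrable_closure[OF op bd]) (intro continuous_intros psic)
    have EG: "(LINT x:\<Omega>|lborel. (norm (G x))\<^sup>2) = E" unfolding E_def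
      by (rule set_lebesgue_integral_cong) (use G op in auto)
    have fin: "emeasure lborel \<Omega> < \<infinity>" using bd emeasure_bounded_finite by blast
    define V where "V = measure lborel \<Omega>"
    have LPhi: "(LINT z:\<Omega>|lborel. (h/2) * (norm (G z))\<^sup>2 + (3/h) * (\<psi> z)\<^sup>2 + \<eta> * (h/2 + 4/h))
        = (h/2) * E + (3/h) * N + \<eta> * (h/2 + 4/h) * V" for \<eta>
    proof -
      have i1: "set_integrable lborel \<Omega> (\<lambda>z. (h/2) * (norm (G z))\<^sup>2)" using iE by (rule set_integrable_mult_right)
      have i2: "set_integrable lborel \<Omega> (\<lambda>z. (3/h) * (\<psi> z)\<^sup>2)" using iN by (rule set_integrable_mult_right)
      have i3: "set_integrable lborel \<Omega> (\<lambda>z. \<eta> * (h/2 + 4/h))"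
        by (rule set_integrable_closure[OF op bd]) (rule continuous_on_const)
      have "(LINT z:\<Omega>|lborel. (h/2) * (norm (G z))\<^sup>2 + (3/h) * (\<psi> z)\<^sup>2 + \<eta> * (h/2 + 4/h))
          = (LINT z:\<Omega>|lborel. (h/2) * (norm (G z))\<^sup>2 + (3/h) * (\<psi> z)\<^sup>2) + (LINT z:\<Omega>|lborel. \<eta> * (h/2 + 4/h))"
        by (rule set_integral_add(2)[OF set_integral_add(1)[OF i1 i2] i3])
      also have "(LINT z:\<Omega>|lborel. (h/2) * (norm (G z))\<^sup>2 + (3/h) * (\<psi> z)\<^sup>2)
          = (LINT z:\<Omega>|lborel. (h/2) * (norm (G z))\<^sup>2) + (LINT z:\<Omega>|lborel. (3/h) * (\<psi> z)\<^sup>2)"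
        by (rule set_integral_add(2)[OF i1 i2])
      also have "(LINT z:\<Omega>|lborel. (h/2) * (norm (G z))\<^sup>2) = (h/2) * E" using EG by simp
      also have "(LINT z:\<Omega>|lborel. (3/h) * (\<psi> z)\<^sup>2) = (3/h) * N" by (simp add: N_def)
      also have "(LINT z:\<Omega>|lborel. \<eta> * (h/2 + 4/h)) = \<eta> * (h/2 + 4/h) * V"
        using set_integral_const[of \<Omega> lborel "\<eta> * (h/2 + 4/h)"] op fin by (simp add: V_def algebra_simps)
      finally show ?thesis .
    qed
    have V0: "V \<ge> 0" by (simp add: V_def)
    have cFpsi: "continuous_on F \<psi>" using psic F_def frontier_sub_closure continuous_on_subset by blast
    have setsI: "F \<inter> Bx x0 (rr x0 / 2) \<in> sets (surface_measure \<Omega>)" for x0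
    proof -
      have "F \<inter> Bx x0 (rr x0 / 2) \<in> sets (restrict_space borel F)"
        by (subst sets_restrict_space_iff) (auto simp: F_def open_Bx)
      then show ?thesis by (metis sets_surface_measure(1) F_def)
    qed
    have main: "(\<integral>\<^sup>+x. ennreal ((\<psi> x)\<^sup>2) \<partial>surface_measure \<Omega>)
        \<le> ennreal (Ct * ((h/2) * E + (3/h) * N + \<eta> * (h/2 + 4/h) * V))" if \<eta>: "\<eta> > 0" for \<eta>
    proof -
      have "(\<integral>\<^sup>+x. ennreal ((\<psi> x)\<^sup>2) \<partial>surface_measure \<Omega>)
          \<le> (\<integral>\<^sup>+x. (\<Sum>x0\<in>P. ennreal ((\<psi> x)\<^sup>2) * indicator (F \<inter> Bx x0 (rr x0 / 2)) x) \<partial>surface_measure \<Omega>)"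
      proof (rule nn_integral_mono)
        fix x assume "x \<in> space (surface_measure \<Omega>)"
        then have xF: "x \<in> F" using sets_surface_measure(2) F_def by blast
        then obtain x0 where x0: "x0 \<in> P" "x \<in> Bx x0 (rr x0 / 2)" using P(3) by blast
        have "ennreal ((\<psi> x)\<^sup>2) = ennreal ((\<psi> x)\<^sup>2) * indicator (F \<inter> Bx x0 (rr x0 / 2)) x"
          using xF x0 by simp
        also have "\<dots> \<le> (\<Sum>x0\<in>P. ennreal ((\<psi> x)\<^sup>2) * indicator (F \<inter> Bx x0 (rr x0 / 2)) x)"
          by (rule member_le_sum[OF x0(1) _ P(2)]) auto
        finally show "ennreal ((\<psi> x)\<^sup>2) \<le> (\<Sum>x0\<in>P. ennreal ((\<psi> x)\<^sup>2) * indicator (F \<inter> Bx x0 (rr x0 / 2)) x)" .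
      qed
      also have "\<dots> = (\<Sum>x0\<in>P. \<integral>\<^sup>+x. ennreal ((\<psi> x)\<^sup>2) * indicator (F \<inter> Bx x0 (rr x0 / 2)) x \<partial>surface_measure \<Omega>)"
      proof (rule nn_integral_sum)
        fix x0 assume "x0 \<in> P"
        have m1: "(\<lambda>x. (\<psi> x)\<^sup>2) \<in> borel_measurable (surface_measure \<Omega>)"
          by (rule surface_measurable) (use cFpsi F_def in \<open>auto intro!: continuous_intros\<close>)
        show "(\<lambda>x. ennreal ((\<psi> x)\<^sup>2) * indicator (F \<inter> Bx x0 (rr x0 / 2)) x) \<in> borel_measurable (surface_measure \<Omega>)"
          using m1 setsI[of x0] by measurable
      qed
      also have "\<dots> \<le> (\<Sum>x0\<in>P. ennreal (\<kappa> x0 * ((h/2) * E + (3/h) * N + \<eta> * (h/2 + 4/h) * V)))"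
      proof (rule sum_mono)
        fix x0 assume x0: "x0 \<in> P"
        then have x0F: "x0 \<in> F" using P(1) by blast
        have hr: "h \<le> rr x0 / 4" using h h0r[OF x0] by linarith
        have "(\<integral>\<^sup>+x. ennreal ((\<psi> x)\<^sup>2) * indicator (frontier \<Omega> \<inter> Bx x0 (rr x0 / 2)) x \<partial>surface_measure \<Omega>)
          \<le> ennreal (\<kappa> x0 * (LINT z:\<Omega>|lborel. (h/2) * (norm (G z))\<^sup>2 + (3/h) * (\<psi> z)\<^sup>2 + \<eta> * (h/2 + 4/h)))"
          unfolding \<kappa>_def by (rule patch.local_est[OF pt[OF x0F] dim psic G(1) dpsi h(1) hr \<eta>])
        from this[unfolded LPhi] show "(\<integral>\<^sup>+x. ennreal ((\<psi> x)\<^sup>2) * indicator (F \<inter> Bx x0 (rr x0 / 2)) x \<partial>surface_measure \<Omega>)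
          \<le> ennreal (\<kappa> x0 * ((h/2) * E + (3/h) * N + \<eta> * (h/2 + 4/h) * V))"
          unfolding F_def .
      qed
      also have "\<dots> = ennreal (Ct * ((h/2) * E + (3/h) * N + \<eta> * (h/2 + 4/h) * V))"
        unfolding Ct_def sum_distrib_right
        using \<kappa>0 P(1) h E0 N0 V0 \<eta> by (subst sum_ennreal) auto
      finally show ?thesis .
    qed
    have lim: "(\<integral>\<^sup>+x. ennreal ((\<psi> x)\<^sup>2) \<partial>surface_measure \<Omega>) \<le> ennreal (Ct * ((h/2) * E + (3/h) * N))"
    proof (rule ennreal_le_epsilon)
      fix e :: real assume e: "0 < e"
      define W where "W = Ct * (h/2 + 4/h) * V + 1"
      have "Ct * (h/2 + 4/h) * V \<ge> 0" using Ct0 h V0 by (intro mult_nonneg_nonneg) auto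
      then have W: "W > 0" by (simp add: W_def)
      define \<eta> where "\<eta> = e / W"
      have \<eta>: "\<eta> > 0" using e W by (simp add: \<eta>_def)
      have "Ct * ((h/2) * E + (3/h) * N + \<eta> * (h/2 + 4/h) * V) \<le> Ct * ((h/2) * E + (3/h) * N) + e"
      proof -
        have "Ct * (\<eta> * (h/2 + 4/h) * V) = \<eta> * (Ct * (h/2 + 4/h) * V)" by simp
        also have "\<dots> \<le> \<eta> * W" using \<eta> by (intro mult_left_mono) (auto simp: W_def)
        also have "\<dots> = e" using W by (simp add: \<eta>_def)
        finally show ?thesis by (simp add: distrib_left)
      qed
      then have "ennreal (Ct * ((h/2) * E + (3/h) * N + \<eta> * (h/2 + 4/h) * V)) \<le> ennreal (Ct * ((h/2) * E + (3/h) * N)) + ennreal e"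
        using Ct0 h E0 N0 e by (simp add: ennreal_plus[symmetric] ennreal_leI del: ennreal_plus)
      then show "(\<integral>\<^sup>+x. ennreal ((\<psi> x)\<^sup>2) \<partial>surface_measure \<Omega>) \<le> ennreal (Ct * ((h/2) * E + (3/h) * N)) + ennreal e"
        using main[OF \<eta>] by (meson order.trans)
    qed
    have "Ct * ((h/2) * E + (3/h) * N) \<le> (3 * Ct + 1) * (h * E + (1/h) * N)"
    proof -
      have "(h/2) * E + (3/h) * N \<le> 3 * (h * E + (1/h) * N)" using h E0 N0 by (simp add: field_simps)
      then have "Ct * ((h/2) * E + (3/h) * N) \<le> Ct * (3 * (h * E + (1/h) * N))" using Ct0 by (intro mult_left_mono)
      also have "\<dots> \<le> (3 * Ct + 1) * (h * E + (1/h) * N)" using h E0 N0 by (simp add: algebra_simps)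
      finally show ?thesis .
    qed
    then have "ennreal (Ct * ((h/2) * E + (3/h) * N)) \<le> ennreal ((3 * Ct + 1) * (h * E + (1/h) * N))"
      by (rule ennreal_leI)
    with lim show "(\<integral>\<^sup>+x. ennreal ((\<psi> x)\<^sup>2) \<partial>surface_measure \<Omega>)
       \<le> ennreal ((3 * Ct + 1) * (h * (LINT x:\<Omega>|lborel. (norm (grad \<psi> x))\<^sup>2) + (1/h) * (LINT x:\<Omega>|lborel. (\<psi> x)\<^sup>2)))"
      unfolding E_def N_def by (meson order.trans)
  qed
  have "0 < 3 * Ct + 1" using Ct0 by simp
  then show ?thesis using h0 key by blast
qed


lemma C1_grad_cont:
  assumes "C1_closure \<Omega> \<psi>"
  obtains G where "continuous_on (closure \<Omega>) G" "\<forall>x\<in>\<Omega>. G x = grad \<psi> x"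
  using assms unfolding C1_closure_def by blast

lemma C1_int_grad:
  fixes \<Omega> :: "'a::euclidean_space set"
  assumes "open \<Omega>" "bounded \<Omega>" "C1_closure \<Omega> \<psi>"
  shows "set_integrable lborel \<Omega> (\<lambda>x. (norm (grad \<psi> x))\<^sup>2)"
proof -
  obtain G where G: "continuous_on (closure \<Omega>) G" "\<forall>x\<in>\<Omega>. G x = grad \<psi> x"
    using C1_grad_cont[OF assms(3)] by blast
  have "set_integrable lborel \<Omega> (\<lambda>x. (norm (G x))\<^sup>2)"
    by (rule set_integrable_closure[OF assms(1,2)]) (intro continuous_intros G)
  then show ?thesis
    by (rule set_integrable_cong[THEN iffD1, rotated -1]) (use G in auto)
qed

lemma C1_int_sq:
  fixes \<Omega> :: "'a::euclidean_space set"
  assumes "open \<Omega>" "bounded \<Omega>" "C1_closure \<Omega> \<psi>"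
  shows "set_integrable lborel \<Omega> (\<lambda>x. (\<psi> x)\<^sup>2)"
  by (rule set_integrable_closure[OF assms(1,2)])
     (use assms(3) in \<open>auto simp: C1_closure_def intro!: continuous_intros\<close>)

lemma boundary_term_lower:
  fixes \<Omega> :: "'a::euclidean_space set" and \<rho> :: "'a \<Rightarrow> real" and a :: real
  assumes "DIM('a) \<ge> 2" "domain \<Omega>" "bounded \<Omega>" "C2_defining_function \<Omega> \<rho>" "a \<ge> 0"
  shows "\<exists>C. \<forall>\<psi>. C1_closure \<Omega> \<psi> \<longrightarrow> (LINT x:\<Omega>|lborel. (\<psi> x)\<^sup>2) = 1 \<longrightarrow>
     (LINT x:\<Omega>|lborel. (norm (grad \<psi> x))\<^sup>2)
        + a * (LINT x|surface_measure \<Omega>. lowest_curvature \<rho> x * (\<psi> x)\<^sup>2) \<ge> - C"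
proof -
  obtain K where K: "K \<ge> 0" "\<forall>x\<in>frontier \<Omega>. lowest_curvature \<rho> x \<ge> - K"
    using curvature_lower[OF assms(1,3,4)] by blast
  obtain C h0 where C: "C > 0" "h0 > 0" and tr: "\<forall>h \<psi>. 0 < h \<longrightarrow> h \<le> h0 \<longrightarrow> C1_closure \<Omega> \<psi> \<longrightarrow>
     (\<integral>\<^sup>+x. ennreal ((\<psi> x)\<^sup>2) \<partial>surface_measure \<Omega>)
       \<le> ennreal (C * (h * (LINT x:\<Omega>|lborel. (norm (grad \<psi> x))\<^sup>2) + (1/h) * (LINT x:\<Omega>|lborel. (\<psi> x)\<^sup>2)))"
    using trace_ineq2[OF assms(1-4)] by blast
  define h where "h = min h0 (1 / (a * K * C + 1))"
  have akc: "a * K * C \<ge> 0" using assms(5) K C by simp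
  have h: "0 < h" "h \<le> h0" using C akc by (auto simp: h_def)
  have hk: "a * K * C * h \<le> 1"
  proof -
    have "h \<le> 1 / (a * K * C + 1)" by (simp add: h_def)
    then have "a * K * C * h \<le> a * K * C * (1 / (a * K * C + 1))"
      using akc by (intro mult_left_mono) auto
    also have "\<dots> \<le> 1" using akc by (simp add: field_simps)
    finally show ?thesis .
  qed
  have op: "open \<Omega>" using assms(2) by (simp add: domain_def)
  show ?thesis
  proof (intro exI[of _ "a * K * C / h"] allI impI)
    fix \<psi> assume \<psi>: "C1_closure \<Omega> \<psi>" and N: "(LINT x:\<Omega>|lborel. (\<psi> x)\<^sup>2) = 1"
    define E where "E = (LINT x:\<Omega>|lborel. (norm (grad \<psi> x))\<^sup>2)"
    have E0: "E \<ge> 0" unfolding E_def set_lebesgue_integral_def by (rule integral_nonneg_AE) (auto simp: indicator_def)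
    have T: "(\<integral>\<^sup>+x. ennreal ((\<psi> x)\<^sup>2) \<partial>surface_measure \<Omega>) \<le> ennreal (C * (h * E + 1 / h))"
      using tr h \<psi> N unfolding E_def by (metis (no_types, lifting) mult_1_left times_divide_eq_left)
    have cF: "continuous_on (frontier \<Omega>) \<psi>"
      using \<psi> unfolding C1_closure_def
      by (meson continuous_on_subset frontier_sub_closure)
    have meas: "(\<lambda>x. (\<psi> x)\<^sup>2) \<in> borel_measurable (surface_measure \<Omega>)"
      by (rule surface_measurable) (intro continuous_intros cF)
    have int: "integrable (surface_measure \<Omega>) (\<lambda>x. (\<psi> x)\<^sup>2)"
      by (rule integrableI_bounded[OF meas]) (use T in \<open>auto intro: order.strict_trans1\<close>)
    have I: "(LINT x|surface_measure \<Omega>. (\<psi> x)\<^sup>2) \<le> C * (h * E + 1 / h)"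
    proof -
      have "ennreal (LINT x|surface_measure \<Omega>. (\<psi> x)\<^sup>2) = (\<integral>\<^sup>+x. ennreal ((\<psi> x)\<^sup>2) \<partial>surface_measure \<Omega>)"
        by (rule nn_integral_eq_integral[OF int, symmetric]) auto
      with T have "ennreal (LINT x|surface_measure \<Omega>. (\<psi> x)\<^sup>2) \<le> ennreal (C * (h * E + 1 / h))" by simp
      moreover have "C * (h * E + 1 / h) \<ge> 0" using C h E0 by simp
      ultimately show ?thesis by (simp add: ennreal_le_iff)
    qed
    have I0: "(LINT x|surface_measure \<Omega>. (\<psi> x)\<^sup>2) \<ge> 0" by (rule integral_nonneg_AE) auto
    have B: "(LINT x|surface_measure \<Omega>. lowest_curvature \<rho> x * (\<psi> x)\<^sup>2)
              \<ge> - K * (LINT x|surface_measure \<Omega>. (\<psi> x)\<^sup>2)"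
    proof (cases "integrable (surface_measure \<Omega>) (\<lambda>x. lowest_curvature \<rho> x * (\<psi> x)\<^sup>2)")
      case True
      have "(LINT x|surface_measure \<Omega>. - K * (\<psi> x)\<^sup>2) \<le> (LINT x|surface_measure \<Omega>. lowest_curvature \<rho> x * (\<psi> x)\<^sup>2)"
      proof (rule integral_mono[OF _ True])
        show "integrable (surface_measure \<Omega>) (\<lambda>x. - K * (\<psi> x)\<^sup>2)" using int by simp
        fix x assume "x \<in> space (surface_measure \<Omega>)"
        then have "x \<in> frontier \<Omega>" using sets_surface_measure(2) by blast
        then have "lowest_curvature \<rho> x \<ge> - K" using K by blast
        then show "- K * (\<psi> x)\<^sup>2 \<le> lowest_curvature \<rho> x * (\<psi> x)\<^sup>2"
          by (intro mult_right_mono) auto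
      qed
      then show ?thesis by simp
    next
      case False
      then show ?thesis using K I0 by (simp add: not_integrable_integral_eq)
    qed
    have "a * (LINT x|surface_measure \<Omega>. lowest_curvature \<rho> x * (\<psi> x)\<^sup>2)
          \<ge> a * (- K * (C * (h * E + 1 / h)))"
    proof -
      have "- K * (C * (h * E + 1 / h)) \<le> - K * (LINT x|surface_measure \<Omega>. (\<psi> x)\<^sup>2)"
        using I K by (simp add: mult_left_mono)
      also note B
      finally show ?thesis using assms(5) by (intro mult_left_mono) auto
    qed
    moreover have "a * (- K * (C * (h * E + 1 / h))) = - (a * K * C * h * E) - a * K * C / h"
      using h by (simp add: field_simps)
    moreover have "(a * K * C * h) * E \<le> E" using mult_right_mono[OF hk E0] by simp
    ultimately show "E + a * (LINT x|surface_measure \<Omega>. lowest_curvature \<rho> x * (\<psi> x)\<^sup>2) \<ge> - (a * K * C / h)"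
      by linarith
  qed
qed


lemma const_test_fn:
  fixes \<Omega> :: "'a::euclidean_space set"
  assumes "domain \<Omega>" "bounded \<Omega>"
  shows "\<exists>\<psi>. C1_closure \<Omega> \<psi> \<and> (LINT x:\<Omega>|lborel. (\<psi> x)\<^sup>2) = 1"
proof -
  have op: "open \<Omega>" and ne: "\<Omega> \<noteq> {}" using assms(1) by (auto simp: domain_def)
  obtain x0 where "x0 \<in> \<Omega>" using ne by blast
  then obtain r where r: "r > 0" "ball x0 r \<subseteq> \<Omega>" using op open_contains_ball by blast
  have fin: "emeasure lborel \<Omega> < \<infinity>" using assms(2) emeasure_bounded_finite by blast
  have "measure lborel (ball x0 r) \<le> measure lborel \<Omega>"
    using r fin op by (intro measure_mono_fmeasurable) (auto simp: fmeasurable_def)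
  moreover have "measure lborel (ball x0 r) > 0" using content_ball_pos[OF r(1)] by simp
  ultimately have v: "measure lborel \<Omega> > 0" by linarith
  define c where "c = 1 / sqrt (measure lborel \<Omega>)"
  have "C1_closure \<Omega> (\<lambda>_. c)"
    unfolding C1_closure_def grad_def
    by (auto simp: frechet_derivative_const intro!: exI[of _ "\<lambda>_. 0"])
  moreover have "(LINT x:\<Omega>|lborel. ((\<lambda>_. c) x)\<^sup>2) = 1"
    using set_integral_const[of \<Omega> lborel "c\<^sup>2"] op fin v
    by (simp add: c_def power_divide)
  ultimately show ?thesis by blast
qed

theorem mainTheorem11:
  fixes \<Omega> :: "'a::euclidean_space set" and \<rho> u :: "'a \<Rightarrow> real"
    and f :: "real \<Rightarrow> real" and a :: real
  assumes "DIM('a) \<ge> 2"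
    and "domain \<Omega>" and "bounded \<Omega>"
    and "C2_defining_function \<Omega> \<rho>"
    and "\<forall>t. f differentiable (at t)" and "continuous_on UNIV (deriv f)"
    and "C2_closure \<Omega> u"
    and "\<forall>x\<in>\<Omega>. - laplacian u x = f (u x)"
    and "\<forall>x\<in>frontier \<Omega>. ((\<lambda>y. grad u y \<bullet> normal \<rho> x) \<longlongrightarrow> 0) (at x within \<Omega>)"
    and "a \<ge> 1"
  shows "ereal (a * lambda_gamma \<Omega> \<rho> f u)
           \<ge> ereal ((a - 1) * lambda0 \<Omega> f u + mu_gamma a \<Omega> \<rho>) - (SUP t. ereal (deriv f t))"
proof -
  have op: "open \<Omega>" using assms(2) by (simp add: domain_def)
  have ucont: "continuous_on (closure \<Omega>) u" using assms(7) by (simp add: C2_closure_def)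
  have fcont: "continuous_on (closure \<Omega>) (\<lambda>x. deriv f (u x))"
    using continuous_on_compose2[OF assms(6) ucont] by simp
  show ?thesis
  proof (cases "(SUP t. ereal (deriv f t))")
    case PInf
    then show ?thesis by simp
  next
    case MInf
    have "ereal (deriv f 0) \<le> (SUP t. ereal (deriv f t))" by (rule SUP_upper) auto
    with MInf show ?thesis by simp
  next
    case (real S)
    have S: "deriv f t \<le> S" for t
    proof -
      have "ereal (deriv f t) \<le> (SUP t. ereal (deriv f t))" by (rule SUP_upper) auto
      with real show ?thesis by simp
    qed
    define E where "E \<psi> = (LINT x:\<Omega>|lborel. (norm (grad \<psi> x))\<^sup>2)" for \<psi> :: "'a \<Rightarrow> real"
    define P where "P \<psi> = (LINT x:\<Omega>|lborel. deriv f (u x) * (\<psi> x)\<^sup>2)" for \<psi> :: "'a \<Rightarrow> real"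
    define B where "B \<psi> = (LINT x|surface_measure \<Omega>. lowest_curvature \<rho> x * (\<psi> x)\<^sup>2)" for \<psi> :: "'a \<Rightarrow> real"
    define T where "T = {\<psi>. C1_closure \<Omega> \<psi> \<and> (LINT x:\<Omega>|lborel. (\<psi> x)\<^sup>2) = 1}"
    have PS: "P \<psi> \<le> S" if "\<psi> \<in> T" for \<psi>
    proof -
      have \<psi>: "C1_closure \<Omega> \<psi>" "(LINT x:\<Omega>|lborel. (\<psi> x)\<^sup>2) = 1" using that by (auto simp: T_def)
      have i1: "set_integrable lborel \<Omega> (\<lambda>x. (\<psi> x)\<^sup>2)" by (rule C1_int_sq[OF op assms(3) \<psi>(1)])
      have i2: "set_integrable lborel \<Omega> (\<lambda>x. deriv f (u x) * (\<psi> x)\<^sup>2)"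
        by (rule set_integrable_closure[OF op assms(3)])
           (use \<psi>(1) fcont in \<open>auto simp: C1_closure_def intro!: continuous_intros\<close>)
      have "P \<psi> \<le> (LINT x:\<Omega>|lborel. S * (\<psi> x)\<^sup>2)"
        unfolding P_def
        by (rule set_integral_mono[OF i2]) (use i1 S in \<open>auto intro: mult_right_mono\<close>)
      also have "\<dots> = S" using \<psi>(2) by simp
      finally show ?thesis .
    qed
    have E0: "E \<psi> \<ge> 0" for \<psi>
      unfolding E_def set_lebesgue_integral_def by (rule integral_nonneg_AE) (auto simp: indicator_def)
    have l0: "lambda0 \<Omega> f u = Inf ((\<lambda>\<psi>. E \<psi> - P \<psi>) ` T)"
      unfolding lambda0_def E_def P_def T_def by (simp add: setcompr_eq_image)
    have lg: "lambda_gamma \<Omega> \<rho> f u = Inf ((\<lambda>\<psi>. E \<psi> - P \<psi> + B \<psi>) ` T)"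
      unfolding lambda_gamma_def E_def P_def B_def T_def by (simp add: setcompr_eq_image)
    have mg: "mu_gamma a \<Omega> \<rho> = Inf ((\<lambda>\<psi>. E \<psi> + a * B \<psi>) ` T)"
      unfolding mu_gamma_def E_def B_def T_def by (simp add: setcompr_eq_image)
    have Tne: "T \<noteq> {}" using const_test_fn[OF assms(2,3)] by (auto simp: T_def)
    have bdd0: "bdd_below ((\<lambda>\<psi>. E \<psi> - P \<psi>) ` T)"
    proof (rule bdd_belowI2[of _ "- S"])
      fix \<psi> assume "\<psi> \<in> T" then show "- S \<le> E \<psi> - P \<psi>" using PS E0[of \<psi>] by force
    qed
    obtain Cm where Cm: "\<forall>\<psi>\<in>T. E \<psi> + a * B \<psi> \<ge> - Cm"
      using boundary_term_lower[OF assms(1-4), of a] assms(10) unfolding T_def E_def B_def by auto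
    have bddm: "bdd_below ((\<lambda>\<psi>. E \<psi> + a * B \<psi>) ` T)"
      by (rule bdd_belowI2[of _ "- Cm"]) (use Cm in auto)
    define R where "R = (a - 1) * lambda0 \<Omega> f u + mu_gamma a \<Omega> \<rho> - S"
    have a0: "a > 0" using assms(10) by simp
    have key: "R / a \<le> E \<psi> - P \<psi> + B \<psi>" if "\<psi> \<in> T" for \<psi>
    proof -
      have "lambda0 \<Omega> f u \<le> E \<psi> - P \<psi>" unfolding l0 by (rule cInf_lower[OF _ bdd0]) (use that in auto)
      then have 1: "(a - 1) * lambda0 \<Omega> f u \<le> (a - 1) * (E \<psi> - P \<psi>)"
        using assms(10) by (intro mult_left_mono) auto
      have 2: "mu_gamma a \<Omega> \<rho> \<le> E \<psi> + a * B \<psi>" unfolding mg by (rule cInf_lower[OF _ bddm]) (use that in auto)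
      have "R \<le> (a - 1) * (E \<psi> - P \<psi>) + E \<psi> + a * B \<psi> - S" unfolding R_def using 1 2 by linarith
      also have "\<dots> \<le> a * (E \<psi> - P \<psi> + B \<psi>)" using PS[OF that] by (simp add: algebra_simps)
      finally show ?thesis using a0 by (simp add: pos_divide_le_eq mult.commute)
    qed
    have "R / a \<le> lambda_gamma \<Omega> \<rho> f u" unfolding lg
      by (rule cInf_greatest) (use Tne key in auto)
    then have "R \<le> a * lambda_gamma \<Omega> \<rho> f u" using a0 by (simp add: pos_divide_le_eq mult.commute)
    then show ?thesis using real unfolding R_def by simp
  qed
qed


end
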